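(* Let $(X,d)$ be a metric space, $\mu$ a non-atomic Borel measure on $X$, $m$ a Borel measure on $X$, $1\le p<\infty$, and let $\Gamma^*\subset\Gamma^\mu$ be a family of paths closed under taking non-trivial subpaths such that any two points of $X$ are joined by a path in $\Gamma^*$. Then the generalized Newton–Sobolev space $N^{1,p}$ (defined with respect to $\mu$, $m$ and $\Gamma^*$), equipped with $\|\cdot\|_{N^{1,p}}$, is a Banach space.
   Context: A path is a continuous map $\gamma:[a,b]\to X$; a subpath is a restriction of $\gamma$ to a subinterval $[c,e]\subset[a,b]$, trivial if $c=e$; $\mathrm{Im}(\gamma)=\gamma([a,b])$. $\mu$ non-atomic means $\mu(\{x\})=0$ for all $x$. $\Gamma^\mu$ is the set of all non-trivial injective paths $\gamma$ in $X$ such that $0<\mu(\mathrm{Im}(\tilde\gamma))<\infty$ for every non-trivial subpath $\tilde\gamma$ of $\gamma$. For a Borel $g:X\to[0,\infty]$ and $\gamma\in\Gamma^\mu$, $\int_\gamma g:=\int_{\mathrm{Im}(\gamma)}g\,d\mu$. For a family $\Gamma\subset\Gamma^*$, its $p$-modulus is $\mathrm{Mod}_p(\Gamma)=\inf\int_X g^p\,dm$, the infimum over all Borel $g:X\to[0,\infty]$ with $\int_\gamma g\ge1$ for all $\gamma\in\Gamma$; a property holds for $p$-almost every path of $\Gamma^*$ if the set of paths in $\Gamma^*$ where it fails has $p$-modulus zero. A Borel function $\rho\ge0$ is a $p$-weak upper gradient of $f:X\to[-\infty,\infty]$ if $|f(x)-f(y)|\le\int_\gamma\rho$ for $p$-almost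 every $\gamma\in\Gamma^*$, where $x,y$ are the endpoints of $\gamma$. $\tilde N^{1,p}$ is the space of functions $f\in L^p(m)$ having a $p$-weak upper gradient in $L^p(m)$, with $\|f\|_{N^{1,p}}=\|f\|_{L^p(m)}+\inf_\rho\|\rho\|_{L^p(m)}$, the infimum over all $p$-weak upper gradients $\rho$ of $f$. $N^{1,p}$ is the quotient of $\tilde N^{1,p}$ by the relation $f\sim g\iff\|f-g\|_{N^{1,p}}=0$. *)

theory Defs
  imports "HOL-Analysis.Analysis"
begin

definition enn_powr :: "ennreal \<Rightarrow> real \<Rightarrow> ennreal" where
  "enn_powr x q = (if x = \<infinity> then \<infinity> else ennreal (enn2real x powr q))"

text \<open>A path gamma on [a,b] is represented by the triple (a, b, gamma); only the
  values of gamma on [a,b] matter.\<close>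
type_synonym 'a path_triple = "real \<times> real \<times> (real \<Rightarrow> 'a)"

definition path_image3 :: "'a path_triple \<Rightarrow> 'a set" where
  "path_image3 P = (case P of (a, b, g) \<Rightarrow> g ` {a..b})"

definition start3 :: "'a path_triple \<Rightarrow> 'a" where
  "start3 P = (case P of (a, b, g) \<Rightarrow> g a)"

definition end3 :: "'a path_triple \<Rightarrow> 'a" where
  "end3 P = (case P of (a, b, g) \<Rightarrow> g b)"

definition Gamma_mu :: "'a::metric_space measure \<Rightarrow> 'a path_triple set" where
  "Gamma_mu \<mu> = {(a, b, g). a < b \<and> continuous_on {a..b} g \<and> inj_on g {a..b} \<and>
      (\<forall>c e. a \<le> c \<and> c < e \<and> e \<le> b \<longrightarrow>
          0 < emeasure \<mu> (g ` {c..e}) \<and> emeasure \<mu> (g ` {c..e}) < \<infinity>)}"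

text \<open>Line integral of g along a path: the mu-integral over its image.\<close>
definition path_int :: "'a::metric_space measure \<Rightarrow> 'a path_triple \<Rightarrow> ('a \<Rightarrow> ennreal) \<Rightarrow> ennreal" where
  "path_int \<mu> P g = (\<integral>\<^sup>+ x. g x * indicator (path_image3 P) x \<partial>\<mu>)"

definition Mod_p :: "'a::metric_space measure \<Rightarrow> 'a measure \<Rightarrow> real \<Rightarrow> 'a path_triple set \<Rightarrow> ennreal" where
  "Mod_p \<mu> m p \<Gamma> = (INF g \<in> {g. g \<in> borel_measurable borel \<and> (\<forall>P\<in>\<Gamma>. 1 \<le> path_int \<mu> P g)}.
       \<integral>\<^sup>+ x. enn_powr (g x) p \<partial>m)"

definition p_ae_path :: "'a::metric_space measure \<Rightarrow> 'a measure \<Rightarrow> real \<Rightarrow> 'a path_triple set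
    \<Rightarrow> ('a path_triple \<Rightarrow> bool) \<Rightarrow> bool" where
  "p_ae_path \<mu> m p \<Gamma>s Q \<longleftrightarrow> Mod_p \<mu> m p {P \<in> \<Gamma>s. \<not> Q P} = 0"

text \<open>Upper gradient inequality |f x - f y| \<le> int_gamma rho, with the convention that
  the left side is infinite whenever f x or f y is infinite.\<close>
definition ug_ineq :: "('a \<Rightarrow> ereal) \<Rightarrow> 'a \<Rightarrow> 'a \<Rightarrow> ennreal \<Rightarrow> bool" where
  "ug_ineq f x y I \<longleftrightarrow>
     (if \<bar>f x\<bar> \<noteq> \<infinity> \<and> \<bar>f y\<bar> \<noteq> \<infinity>
      then ennreal (\<bar>real_of_ereal (f x) - real_of_ereal (f y)\<bar>) \<le> I
      else I = \<infinity>)"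

definition p_weak_ug :: "'a::metric_space measure \<Rightarrow> 'a measure \<Rightarrow> real \<Rightarrow> 'a path_triple set
    \<Rightarrow> ('a \<Rightarrow> ereal) \<Rightarrow> ('a \<Rightarrow> ennreal) \<Rightarrow> bool" where
  "p_weak_ug \<mu> m p \<Gamma>s f \<rho> \<longleftrightarrow> \<rho> \<in> borel_measurable borel \<and>
     p_ae_path \<mu> m p \<Gamma>s (\<lambda>P. ug_ineq f (start3 P) (end3 P) (path_int \<mu> P \<rho>))"

definition Lp_norm_enn :: "'a measure \<Rightarrow> real \<Rightarrow> ('a \<Rightarrow> ennreal) \<Rightarrow> ennreal" where
  "Lp_norm_enn m p g = enn_powr (\<integral>\<^sup>+ x. enn_powr (g x) p \<partial>m) (1 / p)"

definition Lp_norm_ereal :: "'a measure \<Rightarrow> real \<Rightarrow> ('a \<Rightarrow> ereal) \<Rightarrow> ennreal" where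
  "Lp_norm_ereal m p f = Lp_norm_enn m p (\<lambda>x. e2ennreal \<bar>f x\<bar>)"

definition N1p_tilde :: "'a::metric_space measure \<Rightarrow> 'a measure \<Rightarrow> real \<Rightarrow> 'a path_triple set
    \<Rightarrow> ('a \<Rightarrow> ereal) set" where
  "N1p_tilde \<mu> m p \<Gamma>s = {f. f \<in> borel_measurable m \<and> Lp_norm_ereal m p f < \<infinity> \<and>
      (\<exists>\<rho>. p_weak_ug \<mu> m p \<Gamma>s f \<rho> \<and> Lp_norm_enn m p \<rho> < \<infinity>)}"

definition N1p_norm :: "'a::metric_space measure \<Rightarrow> 'a measure \<Rightarrow> real \<Rightarrow> 'a path_triple set
    \<Rightarrow> ('a \<Rightarrow> ereal) \<Rightarrow> ennreal" where
  "N1p_norm \<mu> m p \<Gamma>s f = Lp_norm_ereal m p f +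
      (INF \<rho> \<in> {\<rho>. p_weak_ug \<mu> m p \<Gamma>s f \<rho>}. Lp_norm_enn m p \<rho>)"

end

theory Submission
  imports Defs
begin


lemma enn_powr_ennreal: "0 \<le> r \<Longrightarrow> enn_powr (ennreal r) q = ennreal (r powr q)"
  by (simp add: enn_powr_def)

lemma enn_powr_top[simp]: "enn_powr top q = top"
  by (simp add: enn_powr_def)

lemma enn_powr_0[simp]: "enn_powr 0 q = 0"
  by (simp add: enn_powr_def)

lemma enn_powr_cases: obtains r where "x = ennreal r" "0 \<le> r" | "x = top"
  by (cases x) auto

lemma enn_powr_mono: "0 \<le> q \<Longrightarrow> x \<le> y \<Longrightarrow> enn_powr x q \<le> enn_powr y q"
proof (cases y rule: enn_powr_cases)
  case (1 b)
  assume q: "0 \<le> q" and xy: "x \<le> y"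
  then obtain a where a: "x = ennreal a" "0 \<le> a" "a \<le> b"
    using 1 by (cases x rule: enn_powr_cases) (auto simp: ennreal_le_iff top_unique)
  then show ?thesis using 1 q by (simp add: enn_powr_ennreal powr_mono2)
qed simp

lemma enn_powr_inv: "q \<noteq> 0 \<Longrightarrow> enn_powr (enn_powr x q) (1/q) = x"
proof (cases x rule: enn_powr_cases)
  case (1 r)
  assume "q \<noteq> 0"
  then show ?thesis using 1 by (simp add: enn_powr_ennreal powr_powr)
qed simp

lemma enn_powr_inv': "q \<noteq> 0 \<Longrightarrow> enn_powr (enn_powr x (1/q)) q = x"
  using enn_powr_inv[of "1/q" x] by simp

lemma enn_powr_eq_0_iff: "q \<noteq> 0 \<Longrightarrow> enn_powr x q = 0 \<longleftrightarrow> x = 0"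
  by (cases x rule: enn_powr_cases) (auto simp: enn_powr_ennreal)

lemma enn_powr_eq_top_iff[simp]: "enn_powr x q = top \<longleftrightarrow> x = top"
  by (cases x rule: enn_powr_cases) (auto simp: enn_powr_ennreal)

lemma enn_powr_le_iff: assumes q: "0 < q" shows "enn_powr x q \<le> enn_powr y q \<longleftrightarrow> x \<le> y"
proof
  assume "enn_powr x q \<le> enn_powr y q"
  then have "enn_powr (enn_powr x q) (1/q) \<le> enn_powr (enn_powr y q) (1/q)"
    using q by (rule_tac enn_powr_mono) auto
  moreover have "q \<noteq> 0" using q by simp
  ultimately show "x \<le> y" using enn_powr_inv[of q x] enn_powr_inv[of q y] by simp
qed (use q in \<open>auto intro: enn_powr_mono\<close>)

lemma enn_powr_le_iff2: "0 < q \<Longrightarrow> enn_powr x q \<le> y \<longleftrightarrow> x \<le> enn_powr y (1/q)"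
  using enn_powr_le_iff[of q x "enn_powr y (1/q)"] by (simp add: enn_powr_inv')

lemma enn_powr_less_iff: "0 < q \<Longrightarrow> enn_powr x q < enn_powr y q \<longleftrightarrow> x < y"
  using enn_powr_le_iff[of q y x] by (auto simp: not_le[symmetric])

lemma enn_powr_mult: "0 < q \<Longrightarrow> enn_powr (x * y) q = enn_powr x q * enn_powr y q"
proof (cases x rule: enn_powr_cases)
  case (1 a)
  assume q: "0 < q"
  show ?thesis
  proof (cases y rule: enn_powr_cases)
    case (1 b)
    then show ?thesis using \<open>x = ennreal a\<close> \<open>0 \<le> a\<close> q
      by (simp add: enn_powr_ennreal ennreal_mult[symmetric] powr_mult)
  next
    case 2
    then show ?thesis using \<open>x = ennreal a\<close> \<open>0 \<le> a\<close> q
      by (cases "a = 0") (auto simp: enn_powr_ennreal ennreal_mult_top)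
  qed
next
  case 2
  assume q: "0 < q"
  then show ?thesis using 2
    by (cases "y = 0") (auto simp: ennreal_top_mult enn_powr_eq_0_iff)
qed

lemma enn_powr_SUP: "0 < q \<Longrightarrow> enn_powr (SUP i\<in>I. f i) q = (SUP i\<in>I. enn_powr (f i) q)"
proof (rule antisym)
  assume q: "0 < q"
  let ?t = "SUP i\<in>I. enn_powr (f i) q"
  have "f i \<le> enn_powr ?t (1/q)" if "i \<in> I" for i
    using q that by (subst enn_powr_le_iff2[symmetric]) (auto intro: SUP_upper)
  then have "(SUP i\<in>I. f i) \<le> enn_powr ?t (1/q)" by (rule SUP_least)
  then show "enn_powr (SUP i\<in>I. f i) q \<le> ?t"
    using q by (simp add: enn_powr_le_iff2)
  show "?t \<le> enn_powr (SUP i\<in>I. f i) q"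
    using q by (intro SUP_least enn_powr_mono) (auto intro: SUP_upper)
qed

lemma measurable_enn_powr[measurable]:
  "f \<in> borel_measurable M \<Longrightarrow> (\<lambda>x. enn_powr (f x) q) \<in> borel_measurable M"
proof -
  assume f: "f \<in> borel_measurable M"
  have "{x \<in> space M. f x = top} \<in> sets M"
    using f by measurable
  moreover have "(\<lambda>x. ennreal (enn2real (f x) powr q)) \<in> borel_measurable M"
    using f by measurable
  ultimately show ?thesis
    unfolding enn_powr_def infinity_ennreal_def by (intro measurable_If) auto
qed

lemma enn_powr_le_self: "1 \<le> q \<Longrightarrow> x \<le> 1 \<Longrightarrow> enn_powr x q \<le> x"
proof (cases x rule: enn_powr_cases)
  case (1 r)
  assume "1 \<le> q" "x \<le> 1"
  then have "r \<le> 1" using 1 by (simp add: ennreal_le_1)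
  then have "r powr q \<le> r powr 1" using 1 \<open>1 \<le> q\<close> by (intro powr_mono') auto
  then show ?thesis using 1 by (simp add: enn_powr_ennreal)
qed simp


lemma convex_powr0:
  fixes p u v t :: real
  assumes p: "1 \<le> p" and uv: "0 \<le> u" "0 \<le> v" and t: "0 \<le> t" "t \<le> 1"
  shows "(t*u + (1-t)* v) powr p \<le> t * u powr p + (1-t) * v powr p"
proof (cases "u = 0")
  case True
  have "((1-t)* v) powr p = (1-t) powr p * v powr p" using t uv by (simp add: powr_mult)
  also have "\<dots> \<le> (1-t) powr 1 * v powr p"
    using t p by (intro mult_right_mono powr_mono') auto
  finally show ?thesis using True t p by simp
next
  case u0: False
  show ?thesis
  proof (cases "v = 0")
    case True
    have "(t*u) powr p = t powr p * u powr p" using t uv by (simp add: powr_mult)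
    also have "\<dots> \<le> t powr 1 * u powr p"
      using t p by (intro mult_right_mono powr_mono') auto
    finally show ?thesis using True t p by simp
  next
    case False
    have "convex_on {0<..} (\<lambda>x::real. x powr p)" using p by (rule powr_convex)
    from convex_onD[OF this, of "1-t" u v] t uv u0 False
    show ?thesis by (simp add: algebra_simps)
  qed
qed

lemma mink_real:
  fixes p x y a b :: real
  assumes p: "1 \<le> p" and xy: "0 \<le> x" "0 \<le> y" and ab: "0 < a" "0 < b"
  shows "(x+y) powr p \<le> ((a+b)/a) powr (p-1) * x powr p + ((a+b)/b) powr (p-1) * y powr p"
proof -
  define t where "t = a/(a+b)"
  have t: "0 \<le> t" "t \<le> 1" "1 - t = b/(a+b)" using ab by (auto simp: t_def field_simps)
  have e1: "t*(x/a) = x/(a+b)" using ab by (simp add: t_def)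
  have e2: "(1-t)*(y/b) = y/(a+b)" using ab t(3) by simp
  have eq: "t*(x/a) + (1-t)*(y/b) = (x+y)/(a+b)" using e1 e2 by (simp add: add_divide_distrib)
  have "((x+y)/(a+b)) powr p \<le> t * (x/a) powr p + (1-t) * (y/b) powr p"
    using convex_powr0[OF p, of "x/a" "y/b" t] t xy ab eq by simp
  then have "(x+y) powr p / (a+b) powr p \<le> t * (x powr p / a powr p) + (1-t) * (y powr p / b powr p)"
    using xy ab by (simp add: powr_divide)
  then have "(x+y) powr p \<le> (a+b) powr p * (t * (x powr p / a powr p) + (1-t) * (y powr p / b powr p))"
    using ab by (simp add: divide_le_eq mult.commute)
  also have "\<dots> = ((a+b) powr p * t / a powr p) * x powr p + ((a+b) powr p * (1-t) / b powr p) * y powr p"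
    by (simp add: algebra_simps)
  also have "(a+b) powr p * t / a powr p = ((a+b)/a) powr (p-1)"
  proof -
    have "(a+b) powr p * t / a powr p = (a+b) powr (p-1) / a powr (p-1)"
      using ab by (simp add: t_def powr_diff field_simps)
    then show ?thesis using ab by (simp add: powr_divide)
  qed
  also have "(a+b) powr p * (1-t) / b powr p = ((a+b)/b) powr (p-1)"
  proof -
    have "(a+b) powr p * (1-t) / b powr p = (a+b) powr (p-1) / b powr (p-1)"
      unfolding t(3) using ab by (simp add: powr_diff field_simps)
    then show ?thesis using ab by (simp add: powr_divide)
  qed
  finally show ?thesis .
qed


lemma Lp_le_iff: "0 < p \<Longrightarrow> Lp_norm_enn m p g \<le> c \<longleftrightarrow> (\<integral>\<^sup>+x. enn_powr (g x) p \<partial>m) \<le> enn_powr c p"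
  unfolding Lp_norm_enn_def using enn_powr_le_iff2[of "1/p"] by simp

lemma Lp_pow: "0 < p \<Longrightarrow> enn_powr (Lp_norm_enn m p g) p = (\<integral>\<^sup>+x. enn_powr (g x) p \<partial>m)"
  unfolding Lp_norm_enn_def by (simp add: enn_powr_inv')

lemma Lp_less_top: "Lp_norm_enn m p g < top \<longleftrightarrow> (\<integral>\<^sup>+x. enn_powr (g x) p \<partial>m) < top"
  unfolding Lp_norm_enn_def by (simp add: less_top[symmetric])

lemma Lp_mono_AE: "0 < p \<Longrightarrow> AE x in m. f x \<le> g x \<Longrightarrow> Lp_norm_enn m p f \<le> Lp_norm_enn m p g"
  unfolding Lp_norm_enn_def
  by (intro enn_powr_mono nn_integral_mono_AE) (auto elim!: eventually_mono intro: enn_powr_mono)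

lemma Lp_mono: "0 < p \<Longrightarrow> (\<And>x. f x \<le> g x) \<Longrightarrow> Lp_norm_enn m p f \<le> Lp_norm_enn m p g"
  by (rule Lp_mono_AE) auto

lemma Lp_cong_AE: "AE x in m. f x = g x \<Longrightarrow> Lp_norm_enn m p f = Lp_norm_enn m p g"
  unfolding Lp_norm_enn_def by (subst nn_integral_cong_AE[where v="\<lambda>x. enn_powr (g x) p"]) (auto elim!: eventually_mono)

lemma Lp_zero[simp]: "Lp_norm_enn m p (\<lambda>x. 0) = 0"
  unfolding Lp_norm_enn_def by simp

lemma Lp_cmult: "0 < p \<Longrightarrow> g \<in> borel_measurable m \<Longrightarrow> Lp_norm_enn m p (\<lambda>x. c * g x) = c * Lp_norm_enn m p g"
  unfolding Lp_norm_enn_def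
  by (simp add: enn_powr_mult nn_integral_cmult enn_powr_inv)

lemma Lp_eq0_AE: "0 < p \<Longrightarrow> g \<in> borel_measurable m \<Longrightarrow> Lp_norm_enn m p g = 0 \<Longrightarrow> AE x in m. g x = 0"
  unfolding Lp_norm_enn_def
  by (subst (asm) enn_powr_eq_0_iff) (auto simp: nn_integral_0_iff_AE enn_powr_eq_0_iff elim!: eventually_mono)

lemma Lp_fin_AE: "0 < p \<Longrightarrow> g \<in> borel_measurable m \<Longrightarrow> Lp_norm_enn m p g < top \<Longrightarrow> AE x in m. g x < top"
proof -
  assume "0 < p" "g \<in> borel_measurable m" "Lp_norm_enn m p g < top"
  then have "(\<integral>\<^sup>+x. enn_powr (g x) p \<partial>m) \<noteq> \<infinity>" by (simp add: Lp_less_top)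
  from nn_integral_PInf_AE[OF _ this] \<open>g \<in> borel_measurable m\<close>
  show ?thesis by (auto simp: less_top[symmetric] elim!: eventually_mono)
qed

lemma minkowski:
  assumes p: "1 \<le> p" and f: "f \<in> borel_measurable m" and g: "g \<in> borel_measurable m"
  shows "Lp_norm_enn m p (\<lambda>x. f x + g x) \<le> Lp_norm_enn m p f + Lp_norm_enn m p g"
proof -
  have p0: "0 < p" using p by simp
  let ?A = "Lp_norm_enn m p f" and ?B = "Lp_norm_enn m p g"
  consider "?A = top" | "?B = top" | "?A = 0" | "?B = 0" | "?A \<noteq> top \<and> ?B \<noteq> top \<and> ?A \<noteq> 0 \<and> ?B \<noteq> 0"
    by blast
  then show ?thesis
  proof cases
    case 3
    then have "AE x in m. f x = 0" using Lp_eq0_AE[OF p0 f] by simp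
    then have "Lp_norm_enn m p (\<lambda>x. f x + g x) = ?B" by (intro Lp_cong_AE) (auto elim!: eventually_mono)
    then show ?thesis by simp
  next
    case 4
    then have "AE x in m. g x = 0" using Lp_eq0_AE[OF p0 g] by simp
    then have "Lp_norm_enn m p (\<lambda>x. f x + g x) = ?A" by (intro Lp_cong_AE) (auto elim!: eventually_mono)
    then show ?thesis by simp
  next
    case 5
    then obtain a b where ab: "?A = ennreal a" "?B = ennreal b" "0 < a" "0 < b"
      by (cases ?A rule: enn_powr_cases; cases ?B rule: enn_powr_cases) auto
    define K1 where "K1 = ((a+b)/a) powr (p-1)"
    define K2 where "K2 = ((a+b)/b) powr (p-1)"
    have K: "0 < K1" "0 < K2" using ab by (auto simp: K1_def K2_def)
    have pw: "enn_powr (f x + g x) p \<le> ennreal K1 * enn_powr (f x) p + ennreal K2 * enn_powr (g x) p" for x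
    proof (cases "f x" rule: enn_powr_cases)
      case (1 u)
      show ?thesis
      proof (cases "g x" rule: enn_powr_cases)
        case (1 v)
        have "(u+v) powr p \<le> K1 * u powr p + K2 * v powr p"
          unfolding K1_def K2_def using mink_real[OF p, of u v a b] 1 \<open>0 \<le> u\<close> ab by simp
        then show ?thesis using 1 \<open>f x = ennreal u\<close> \<open>0 \<le> u\<close> K
          by (simp add: enn_powr_ennreal ennreal_mult[symmetric] ennreal_plus[symmetric] del: ennreal_plus)
      next
        case 2
        then show ?thesis using K by (simp add: ennreal_mult_top)
      qed
    next
      case 2
      then show ?thesis using K by (simp add: ennreal_mult_top)
    qed
    have "(\<integral>\<^sup>+x. enn_powr (f x + g x) p \<partial>m) \<le>
          (\<integral>\<^sup>+x. ennreal K1 * enn_powr (f x) p + ennreal K2 * enn_powr (g x) p \<partial>m)"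
      by (intro nn_integral_mono pw)
    also have "\<dots> = ennreal K1 * (\<integral>\<^sup>+x. enn_powr (f x) p \<partial>m) + ennreal K2 * (\<integral>\<^sup>+x. enn_powr (g x) p \<partial>m)"
      using f g by (simp add: nn_integral_add nn_integral_cmult)
    also have "\<dots> = ennreal K1 * enn_powr ?A p + ennreal K2 * enn_powr ?B p"
      using p0 by (simp add: Lp_pow)
    also have "\<dots> = ennreal (K1 * a powr p + K2 * b powr p)"
      using ab K by (simp add: enn_powr_ennreal ennreal_plus[symmetric] ennreal_mult[symmetric] del: ennreal_plus)
    also have "K1 * a powr p + K2 * b powr p = (a+b) powr p"
    proof -
      have pa: "a powr p = a powr (p-1) * a" "b powr p = b powr (p-1) * b"
        using ab by (simp_all add: powr_diff)
      have "K1 = (a+b) powr (p-1) / a powr (p-1)" "K2 = (a+b) powr (p-1) / b powr (p-1)"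
        using ab by (simp_all add: K1_def K2_def powr_divide)
      then have "K1 * a powr p = (a+b) powr (p-1) * a" "K2 * b powr p = (a+b) powr (p-1) * b"
        using ab pa by simp_all
      moreover have "(a+b) powr p = (a+b) powr (p-1) * (a+b)"
        using ab by (simp add: powr_diff)
      ultimately show ?thesis by (simp add: algebra_simps)
    qed
    also have "ennreal ((a+b) powr p) = enn_powr (?A + ?B) p"
      using ab by (simp add: enn_powr_ennreal ennreal_plus[symmetric] del: ennreal_plus)
    finally show ?thesis using p0 by (simp add: Lp_le_iff)
  qed auto
qed


lemma minkowski_sum:
  assumes p: "1 \<le> p" and g: "\<And>i. g i \<in> borel_measurable m"
  shows "Lp_norm_enn m p (\<lambda>x. \<Sum>i<(n::nat). g i x) \<le> (\<Sum>i<n. Lp_norm_enn m p (g i))"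
proof (induction n)
  case 0
  then show ?case by simp
next
  case (Suc n)
  have "Lp_norm_enn m p (\<lambda>x. \<Sum>i<Suc n. g i x) = Lp_norm_enn m p (\<lambda>x. (\<Sum>i<n. g i x) + g n x)"
    by simp
  also have "\<dots> \<le> Lp_norm_enn m p (\<lambda>x. \<Sum>i<n. g i x) + Lp_norm_enn m p (g n)"
    using g by (intro minkowski p) auto
  also have "\<dots> \<le> (\<Sum>i<n. Lp_norm_enn m p (g i)) + Lp_norm_enn m p (g n)"
    using Suc by (intro add_right_mono)
  finally show ?case by simp
qed

lemma minkowski_suminf:
  assumes p: "1 \<le> p" and g: "\<And>i. g i \<in> borel_measurable m"
  shows "Lp_norm_enn m p (\<lambda>x. \<Sum>i. g i x) \<le> (\<Sum>i. Lp_norm_enn m p (g i))"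
proof -
  have p0: "0 < p" "0 < 1/p" using p by auto
  have inc: "incseq (\<lambda>n x. enn_powr (\<Sum>i<n. g i x) p)"
    unfolding incseq_def le_fun_def using p0 by (auto intro!: enn_powr_mono sum_mono2)
  have "Lp_norm_enn m p (\<lambda>x. \<Sum>i. g i x) =
        enn_powr (\<integral>\<^sup>+x. (SUP n. enn_powr (\<Sum>i<n. g i x) p) \<partial>m) (1/p)"
    unfolding Lp_norm_enn_def suminf_eq_SUP using p0 by (simp add: enn_powr_SUP)
  also have "\<dots> = enn_powr (SUP n. \<integral>\<^sup>+x. enn_powr (\<Sum>i<n. g i x) p \<partial>m) (1/p)"
    using g by (subst nn_integral_monotone_convergence_SUP[OF inc]) auto
  also have "\<dots> = (SUP n. Lp_norm_enn m p (\<lambda>x. \<Sum>i<n. g i x))"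
    unfolding Lp_norm_enn_def using p0 by (simp add: enn_powr_SUP)
  also have "\<dots> \<le> (SUP n. \<Sum>i<n. Lp_norm_enn m p (g i))"
    by (intro SUP_mono) (auto intro!: minkowski_sum p g)
  also have "\<dots> = (\<Sum>i. Lp_norm_enn m p (g i))"
    by (simp add: suminf_eq_SUP)
  finally show ?thesis .
qed

lemma ennreal_suminf_upper: "(f::nat \<Rightarrow> ennreal) i \<le> (\<Sum>j. f j)"
proof -
  have "f i \<le> (\<Sum>j<Suc i. f j)" by (intro member_le_sum) auto
  also have "\<dots> \<le> (\<Sum>j. f j)" by (intro sum_le_suminf) auto
  finally show ?thesis .
qed

lemma suminf_one_ennreal: "(\<Sum>j::nat. (1::ennreal)) = top"
proof -
  have "(\<Sum>j::nat. (1::ennreal)) = (SUP n. of_nat n)"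
    by (simp add: suminf_eq_SUP)
  then show ?thesis using ennreal_SUP_of_nat_eq_top by simp
qed

lemma geom_ennreal: "(\<Sum>i. ennreal (c * (1/2)^(i+k))) = ennreal (2 * c * (1/2)^k)" if "0 \<le> c"
proof -
  have "(\<lambda>i. c * (1/2)^(i+k)) sums (c * (1/2)^k * 2)"
    using sums_mult[OF geometric_sums[of "1/2::real"], of "c * (1/2)^k"]
    by (simp add: power_add mult_ac)
  then show ?thesis using that by (subst suminf_ennreal_eq) (auto simp: mult_ac)
qed


locale NS =
  fixes \<mu> m :: "'a::metric_space measure" and p :: real and \<Gamma>s :: "'a path_triple set"
  assumes sets_mu: "sets \<mu> = sets borel"
    and sets_m: "sets m = sets borel"
    and p: "1 \<le> p"
    and sub: "\<Gamma>s \<subseteq> Gamma_mu \<mu>"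
    and subpath_closed: "\<And>a b g c e. (a, b, g) \<in> \<Gamma>s \<Longrightarrow> a \<le> c \<Longrightarrow> c < e \<Longrightarrow> e \<le> b
                           \<Longrightarrow> (c, e, g) \<in> \<Gamma>s"
begin

lemma p0: "0 < p" using p by simp

lemma meas_mu: "g \<in> borel_measurable borel \<Longrightarrow> g \<in> borel_measurable \<mu>"
  by (subst measurable_cong_sets[OF sets_mu refl])

lemma meas_m: "g \<in> borel_measurable borel \<Longrightarrow> g \<in> borel_measurable m"
  by (subst measurable_cong_sets[OF sets_m refl])

lemma meas_m_iff: "g \<in> borel_measurable m \<longleftrightarrow> g \<in> borel_measurable borel"
  by (subst measurable_cong_sets[OF sets_m refl]) simp

lemma image_sets: assumes "P \<in> \<Gamma>s" shows "path_image3 P \<in> sets \<mu>"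
proof -
  obtain a b g where P: "P = (a, b, g)" by (cases P) auto
  with assms sub have "a < b" "0 < emeasure \<mu> (g ` {a..b})" by (auto simp: Gamma_mu_def)
  then have "g ` {a..b} \<in> sets \<mu>" using emeasure_notin_sets by fastforce
  then show ?thesis by (simp add: P path_image3_def)
qed

lemma path_int_mono: "(\<And>x. f x \<le> g x) \<Longrightarrow> path_int \<mu> P f \<le> path_int \<mu> P g"
  unfolding path_int_def by (intro nn_integral_mono mult_right_mono) auto

lemma path_int_sub: "path_image3 P \<subseteq> path_image3 Q \<Longrightarrow> path_int \<mu> P f \<le> path_int \<mu> Q f"
  unfolding path_int_def by (intro nn_integral_mono mult_left_mono) (auto split: split_indicator)

lemma meas_pi: "P \<in> \<Gamma>s \<Longrightarrow> (f::'a \<Rightarrow> ennreal) \<in> borel_measurable borel \<Longrightarrow>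
    (\<lambda>x. f x * indicator (path_image3 P) x) \<in> borel_measurable \<mu>"
proof -
  assume a: "P \<in> \<Gamma>s" "f \<in> borel_measurable borel"
  have [measurable]: "f \<in> borel_measurable \<mu>" "path_image3 P \<in> sets \<mu>"
    using a by (auto intro: meas_mu image_sets)
  show ?thesis by measurable
qed

lemma path_int_add: "P \<in> \<Gamma>s \<Longrightarrow> f \<in> borel_measurable borel \<Longrightarrow> g \<in> borel_measurable borel \<Longrightarrow>
    path_int \<mu> P (\<lambda>x. f x + g x) = path_int \<mu> P f + path_int \<mu> P g"
  unfolding path_int_def using meas_pi[of P f] meas_pi[of P g]
  by (simp add: distrib_right nn_integral_add)

lemma path_int_cmult: "P \<in> \<Gamma>s \<Longrightarrow> f \<in> borel_measurable borel \<Longrightarrow>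
    path_int \<mu> P (\<lambda>x. c * f x) = c * path_int \<mu> P f"
  unfolding path_int_def using meas_pi[of P f]
  by (simp add: mult.assoc nn_integral_cmult)

lemma path_int_suminf: "P \<in> \<Gamma>s \<Longrightarrow> (\<And>i. f i \<in> borel_measurable borel) \<Longrightarrow>
    path_int \<mu> P (\<lambda>x. \<Sum>i. f i x) = (\<Sum>i. path_int \<mu> P (f i))"
proof -
  assume a: "P \<in> \<Gamma>s" "\<And>i. f i \<in> borel_measurable borel"
  have "(\<integral>\<^sup>+x. (\<Sum>i. f i x) * indicator (path_image3 P) x \<partial>\<mu>) =
        (\<integral>\<^sup>+x. (\<Sum>i. f i x * indicator (path_image3 P) x) \<partial>\<mu>)" by simp
  also have "\<dots> = (\<Sum>i. \<integral>\<^sup>+x. f i x * indicator (path_image3 P) x \<partial>\<mu>)"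
    using a meas_pi by (intro nn_integral_suminf) auto
  finally show ?thesis unfolding path_int_def .
qed

definition null_fam :: "'a path_triple set \<Rightarrow> bool" where
  "null_fam \<Gamma> \<longleftrightarrow> (\<exists>g\<in>borel_measurable borel. Lp_norm_enn m p g < top \<and> (\<forall>P\<in>\<Gamma>. path_int \<mu> P g = top))"

lemma null_mono: "\<Gamma>1 \<subseteq> \<Gamma>2 \<Longrightarrow> null_fam \<Gamma>2 \<Longrightarrow> null_fam \<Gamma>1"
  unfolding null_fam_def by blast

lemma null_Un: assumes "null_fam A" "null_fam B" shows "null_fam (A \<union> B)"
proof -
  obtain f g where f: "f \<in> borel_measurable borel" "Lp_norm_enn m p f < top" "\<forall>P\<in>A. path_int \<mu> P f = top"
    and g: "g \<in> borel_measurable borel" "Lp_norm_enn m p g < top" "\<forall>P\<in>B. path_int \<mu> P g = top"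
    using assms unfolding null_fam_def by blast
  have "Lp_norm_enn m p (\<lambda>x. f x + g x) \<le> Lp_norm_enn m p f + Lp_norm_enn m p g"
    using f g by (intro minkowski p meas_m) auto
  also have "\<dots> < top" using f g by simp
  finally have L: "Lp_norm_enn m p (\<lambda>x. f x + g x) < top" .
  have "path_int \<mu> P (\<lambda>x. f x + g x) = top" if "P \<in> A \<union> B" for P
  proof -
    have "path_int \<mu> P f \<le> path_int \<mu> P (\<lambda>x. f x + g x)" "path_int \<mu> P g \<le> path_int \<mu> P (\<lambda>x. f x + g x)"
      by (auto intro!: path_int_mono)
    then show ?thesis using that f g by (auto simp: top_unique)
  qed
  then show ?thesis unfolding null_fam_def using f g L by (intro bexI[of _ "\<lambda>x. f x + g x"]) auto
qed

lemma null_small: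
  assumes "\<Gamma> \<subseteq> \<Gamma>s" "null_fam \<Gamma>" "0 < e"
  shows "\<exists>g\<in>borel_measurable borel. Lp_norm_enn m p g \<le> ennreal e \<and> (\<forall>P\<in>\<Gamma>. path_int \<mu> P g = top)"
proof -
  obtain g where g: "g \<in> borel_measurable borel" "Lp_norm_enn m p g < top" "\<forall>P\<in>\<Gamma>. path_int \<mu> P g = top"
    using assms unfolding null_fam_def by blast
  show ?thesis
  proof (cases "Lp_norm_enn m p g = 0")
    case True
    then show ?thesis using g by (intro bexI[of _ g]) auto
  next
    case False
    then obtain L where L: "Lp_norm_enn m p g = ennreal L" "0 < L"
      using g(2) by (cases "Lp_norm_enn m p g" rule: enn_powr_cases) (auto simp: less_top)
    define c where "c = e / L"
    have c: "0 < c" using L assms by (simp add: c_def)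
    have "Lp_norm_enn m p (\<lambda>x. ennreal c * g x) = ennreal c * ennreal L"
      using g L by (simp add: Lp_cmult p0 meas_m)
    also have "\<dots> = ennreal e" using c L by (simp add: ennreal_mult[symmetric] c_def)
    finally have 1: "Lp_norm_enn m p (\<lambda>x. ennreal c * g x) = ennreal e" .
    have 2: "path_int \<mu> P (\<lambda>x. ennreal c * g x) = top" if "P \<in> \<Gamma>" for P
      using that assms g c by (subst path_int_cmult) (auto simp: ennreal_mult_top)
    show ?thesis using 1 2 g by (intro bexI[of _ "\<lambda>x. ennreal c * g x"]) auto
  qed
qed

lemma null_UN:
  assumes "\<And>i::nat. \<Gamma> i \<subseteq> \<Gamma>s" "\<And>i. null_fam (\<Gamma> i)"
  shows "null_fam (\<Union>i. \<Gamma> i)"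
proof -
  have "\<forall>i. \<exists>g\<in>borel_measurable borel. Lp_norm_enn m p g \<le> ennreal ((1/2)^i) \<and> (\<forall>P\<in>\<Gamma> i. path_int \<mu> P g = top)"
    using assms by (intro allI null_small) auto
  then obtain G where G: "\<And>i. G i \<in> borel_measurable borel" "\<And>i. Lp_norm_enn m p (G i) \<le> ennreal ((1/2)^i)"
      "\<And>i P. P \<in> \<Gamma> i \<Longrightarrow> path_int \<mu> P (G i) = top"
    by metis
  have "Lp_norm_enn m p (\<lambda>x. \<Sum>i. G i x) \<le> (\<Sum>i. Lp_norm_enn m p (G i))"
    using G by (intro minkowski_suminf p meas_m)
  also have "\<dots> \<le> (\<Sum>i. ennreal (1 * (1/2)^(i+0)))"
    using G by (intro suminf_le) auto
  also have "\<dots> = ennreal 2" by (subst geom_ennreal) auto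
  finally have L: "Lp_norm_enn m p (\<lambda>x. \<Sum>i. G i x) < top" by (simp add: le_less_trans)
  have "path_int \<mu> P (\<lambda>x. \<Sum>i. G i x) = top" if "P \<in> \<Gamma> i" for P i
  proof -
    have "path_int \<mu> P (G i) \<le> path_int \<mu> P (\<lambda>x. \<Sum>i. G i x)"
      by (intro path_int_mono ennreal_suminf_upper)
    then show ?thesis using G that by (simp add: top_unique)
  qed
  then show ?thesis unfolding null_fam_def using G L by (intro bexI[of _ "\<lambda>x. \<Sum>i. G i x"]) auto
qed

lemma null_imp_Mod0:
  assumes "\<Gamma> \<subseteq> \<Gamma>s" "null_fam \<Gamma>"
  shows "Mod_p \<mu> m p \<Gamma> = 0"
proof -
  have "Mod_p \<mu> m p \<Gamma> \<le> 0 + ennreal e" if e: "0 < e" for e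
  proof -
    obtain g where g: "g \<in> borel_measurable borel" "Lp_norm_enn m p g \<le> ennreal (e powr (1/p))"
      "\<forall>P\<in>\<Gamma>. path_int \<mu> P g = top"
      using null_small[OF assms, of "e powr (1/p)"] e by auto
    have "Mod_p \<mu> m p \<Gamma> \<le> (\<integral>\<^sup>+x. enn_powr (g x) p \<partial>m)"
      unfolding Mod_p_def using g by (intro INF_lower) auto
    also have "\<dots> \<le> enn_powr (ennreal (e powr (1/p))) p"
      using g(2) Lp_le_iff[OF p0] by blast
    also have "\<dots> = ennreal ((e powr (1/p)) powr p)" by (rule enn_powr_ennreal) simp
    also have "(e powr (1/p)) powr p = e" using e p0 by (simp add: powr_powr)
    finally show ?thesis by simp
  qed
  then have "Mod_p \<mu> m p \<Gamma> \<le> 0" by (rule ennreal_le_epsilon)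
  then show ?thesis by simp
qed

lemma Mod0_imp_null:
  assumes "\<Gamma> \<subseteq> \<Gamma>s" "Mod_p \<mu> m p \<Gamma> = 0"
  shows "null_fam \<Gamma>"
proof -
  have "\<exists>g\<in>borel_measurable borel. (\<forall>P\<in>\<Gamma>. 1 \<le> path_int \<mu> P g) \<and> Lp_norm_enn m p g \<le> ennreal ((1/2)^i)" for i::nat
  proof -
    have "0 < enn_powr (ennreal ((1/2)^i)) p" using p0
      by (simp add: enn_powr_ennreal)
    then have "Mod_p \<mu> m p \<Gamma> < enn_powr (ennreal ((1/2)^i)) p" using assms by simp
    then obtain g where "g \<in> borel_measurable borel" "\<forall>P\<in>\<Gamma>. 1 \<le> path_int \<mu> P g"
      "(\<integral>\<^sup>+x. enn_powr (g x) p \<partial>m) < enn_powr (ennreal ((1/2)^i)) p"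
      unfolding Mod_p_def INF_less_iff by auto
    moreover have "Lp_norm_enn m p g \<le> ennreal ((1/2)^i)"
      using Lp_le_iff[OF p0, of m g] \<open>(\<integral>\<^sup>+x. enn_powr (g x) p \<partial>m) < _\<close> by simp
    ultimately show ?thesis by blast
  qed
  then obtain G where G: "\<And>i. G i \<in> borel_measurable borel" "\<And>i P. P \<in> \<Gamma> \<Longrightarrow> 1 \<le> path_int \<mu> P (G i)"
     "\<And>i. Lp_norm_enn m p (G i) \<le> ennreal ((1/2)^i)"
    by metis
  have "Lp_norm_enn m p (\<lambda>x. \<Sum>i. G i x) \<le> (\<Sum>i. Lp_norm_enn m p (G i))"
    using G by (intro minkowski_suminf p meas_m)
  also have "\<dots> \<le> (\<Sum>i. ennreal (1 * (1/2)^(i+0)))"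
    using G by (intro suminf_le) auto
  also have "\<dots> = ennreal 2" by (subst geom_ennreal) auto
  finally have L: "Lp_norm_enn m p (\<lambda>x. \<Sum>i. G i x) < top" by (simp add: le_less_trans)
  have "path_int \<mu> P (\<lambda>x. \<Sum>i. G i x) = top" if "P \<in> \<Gamma>" for P
  proof -
    have "(\<Sum>i::nat. (1::ennreal)) \<le> (\<Sum>i. path_int \<mu> P (G i))"
      using G that by (intro suminf_le) auto
    also have "\<dots> = path_int \<mu> P (\<lambda>x. \<Sum>i. G i x)"
      using that assms G by (subst path_int_suminf) auto
    finally show ?thesis by (simp add: suminf_one_ennreal top_unique)
  qed
  then show ?thesis unfolding null_fam_def using G L by (intro bexI[of _ "\<lambda>x. \<Sum>i. G i x"]) auto
qed

lemma p_ae_iff: "p_ae_path \<mu> m p \<Gamma>s Q \<longleftrightarrow> null_fam {P\<in>\<Gamma>s. \<not> Q P}"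
proof -
  have s: "{P\<in>\<Gamma>s. \<not> Q P} \<subseteq> \<Gamma>s" by auto
  show ?thesis unfolding p_ae_path_def using null_imp_Mod0[OF s] Mod0_imp_null[OF s] by auto
qed

lemma pwug_iff: "p_weak_ug \<mu> m p \<Gamma>s f \<rho> \<longleftrightarrow> \<rho> \<in> borel_measurable borel \<and>
    null_fam {P\<in>\<Gamma>s. \<not> ug_ineq f (start3 P) (end3 P) (path_int \<mu> P \<rho>)}"
  unfolding p_weak_ug_def p_ae_iff by simp

end


lemma ug_top: "ug_ineq f x y top"
  unfolding ug_ineq_def by simp

lemma ug_fin:
  assumes "ug_ineq f x y I" "I < top"
  shows "\<bar>f x\<bar> \<noteq> \<infinity>" "\<bar>f y\<bar> \<noteq> \<infinity>"
    "ennreal \<bar>real_of_ereal (f x) - real_of_ereal (f y)\<bar> \<le> I"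
  using assms unfolding ug_ineq_def by (auto split: if_splits)

lemma ug_intro:
  "\<bar>f x\<bar> \<noteq> \<infinity> \<Longrightarrow> \<bar>f y\<bar> \<noteq> \<infinity> \<Longrightarrow> ennreal \<bar>real_of_ereal (f x) - real_of_ereal (f y)\<bar> \<le> I
   \<Longrightarrow> ug_ineq f x y I"
  unfolding ug_ineq_def by simp

lemma ereal_fin_obtain: assumes "\<bar>a::ereal\<bar> \<noteq> \<infinity>" obtains r where "a = ereal r"
  using assms by (cases a) auto

lemma ug_comb:
  assumes h: "\<And>z. \<bar>h1 z\<bar> \<noteq> \<infinity> \<Longrightarrow> \<bar>h2 z\<bar> \<noteq> \<infinity> \<Longrightarrow> h z = h1 z + h2 z"
    and u1: "ug_ineq h1 x y I1" and u2: "ug_ineq h2 x y I2"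
  shows "ug_ineq h x y (I1 + I2)"
proof (cases "I1 < top \<and> I2 < top")
  case True
  then have f1: "\<bar>h1 x\<bar> \<noteq> \<infinity>" "\<bar>h1 y\<bar> \<noteq> \<infinity>" "ennreal \<bar>real_of_ereal (h1 x) - real_of_ereal (h1 y)\<bar> \<le> I1"
    and f2: "\<bar>h2 x\<bar> \<noteq> \<infinity>" "\<bar>h2 y\<bar> \<noteq> \<infinity>" "ennreal \<bar>real_of_ereal (h2 x) - real_of_ereal (h2 y)\<bar> \<le> I2"
    using ug_fin[OF u1] ug_fin[OF u2] by auto
  obtain a1 b1 a2 b2 where r: "h1 x = ereal a1" "h1 y = ereal b1" "h2 x = ereal a2" "h2 y = ereal b2"
    using f1 f2 by (metis ereal_fin_obtain)
  have hx: "h x = ereal (a1 + a2)" "h y = ereal (b1 + b2)" using h[of x] h[of y] r f1 f2 by auto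
  have "ennreal \<bar>(a1 + a2) - (b1 + b2)\<bar> \<le> ennreal (\<bar>a1 - b1\<bar> + \<bar>a2 - b2\<bar>)"
    by (intro ennreal_leI) auto
  also have "\<dots> = ennreal \<bar>a1 - b1\<bar> + ennreal \<bar>a2 - b2\<bar>" by (simp add: ennreal_plus)
  also have "\<dots> \<le> I1 + I2" using f1(3) f2(3) r by (intro add_mono) auto
  finally show ?thesis using hx by (intro ug_intro) auto
next
  case False
  then have "I1 = top \<or> I2 = top" by (auto simp: not_less top_unique)
  then show ?thesis by (auto simp: ug_top)
qed

lemma ug_neg: "ug_ineq (\<lambda>z. - f z) x y I \<longleftrightarrow> ug_ineq f x y I"
proof -
  have "\<bar>- real_of_ereal (f x) + real_of_ereal (f y)\<bar> = \<bar>real_of_ereal (f x) - real_of_ereal (f y)\<bar>"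
    by simp
  then show ?thesis unfolding ug_ineq_def by simp
qed

lemma ug_scale:
  assumes "ug_ineq f x y I"
  shows "ug_ineq (\<lambda>z. ereal c * f z) x y (ennreal \<bar>c\<bar> * I)"
proof (cases "I < top")
  case True
  then have f: "\<bar>f x\<bar> \<noteq> \<infinity>" "\<bar>f y\<bar> \<noteq> \<infinity>" "ennreal \<bar>real_of_ereal (f x) - real_of_ereal (f y)\<bar> \<le> I"
    using ug_fin[OF assms] by auto
  obtain a b where r: "f x = ereal a" "f y = ereal b" using f by (metis ereal_fin_obtain)
  have "ennreal \<bar>c * a - c * b\<bar> = ennreal \<bar>c\<bar> * ennreal \<bar>a - b\<bar>"
    by (simp add: ennreal_mult[symmetric] abs_mult[symmetric] right_diff_distrib)
  also have "\<dots> \<le> ennreal \<bar>c\<bar> * I" using f(3) r by (intro mult_left_mono) auto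
  finally show ?thesis using r by (intro ug_intro) auto
next
  case False
  then have I: "I = top" by (simp add: less_top[symmetric])
  show ?thesis
  proof (cases "c = 0")
    case True
    then show ?thesis by (intro ug_intro) (auto simp: zero_ereal_def[symmetric])
  next
    case False
    then show ?thesis using I by (simp add: ennreal_mult_top ug_top)
  qed
qed

lemma e2ennreal_add: "0 \<le> a \<Longrightarrow> 0 \<le> b \<Longrightarrow> e2ennreal (a + b) = e2ennreal a + e2ennreal b"
  by (cases a; cases b) (auto simp: e2ennreal_ereal ennreal_plus[symmetric] simp del: ennreal_plus)

lemma e2ennreal_abs_le:
  assumes "\<bar>h x\<bar> \<le> \<bar>h1 x\<bar> + \<bar>h2 x\<bar>"
  shows "e2ennreal \<bar>h x\<bar> \<le> e2ennreal \<bar>h1 x\<bar> + e2ennreal \<bar>h2 x\<bar>"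
  using e2ennreal_mono[OF assms] by (simp add: e2ennreal_add)

context NS
begin

lemma pwug_comb:
  assumes u1: "p_weak_ug \<mu> m p \<Gamma>s h1 \<rho>1" and u2: "p_weak_ug \<mu> m p \<Gamma>s h2 \<rho>2"
    and h: "\<And>z. \<bar>h1 z\<bar> \<noteq> \<infinity> \<Longrightarrow> \<bar>h2 z\<bar> \<noteq> \<infinity> \<Longrightarrow> h z = h1 z + h2 z"
  shows "p_weak_ug \<mu> m p \<Gamma>s h (\<lambda>x. \<rho>1 x + \<rho>2 x)"
proof -
  have m1: "\<rho>1 \<in> borel_measurable borel" and m2: "\<rho>2 \<in> borel_measurable borel"
    using u1 u2 by (auto simp: pwug_iff)
  have "{P\<in>\<Gamma>s. \<not> ug_ineq h (start3 P) (end3 P) (path_int \<mu> P (\<lambda>x. \<rho>1 x + \<rho>2 x))} \<subseteq>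
        {P\<in>\<Gamma>s. \<not> ug_ineq h1 (start3 P) (end3 P) (path_int \<mu> P \<rho>1)} \<union>
        {P\<in>\<Gamma>s. \<not> ug_ineq h2 (start3 P) (end3 P) (path_int \<mu> P \<rho>2)}"
  proof -
    have "ug_ineq h (start3 P) (end3 P) (path_int \<mu> P (\<lambda>x. \<rho>1 x + \<rho>2 x))"
      if "P\<in>\<Gamma>s" "ug_ineq h1 (start3 P) (end3 P) (path_int \<mu> P \<rho>1)"
         "ug_ineq h2 (start3 P) (end3 P) (path_int \<mu> P \<rho>2)" for P
      using ug_comb[of h1 h2 h, OF h that(2,3)] path_int_add[OF that(1) m1 m2] by simp
    then show ?thesis by blast
  qed
  then show ?thesis using u1 u2 m1 m2 unfolding pwug_iff
    by (auto intro: null_mono null_Un)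
qed

lemma pwug_neg: "p_weak_ug \<mu> m p \<Gamma>s (\<lambda>z. - f z) \<rho> \<longleftrightarrow> p_weak_ug \<mu> m p \<Gamma>s f \<rho>"
  unfolding pwug_iff ug_neg ..

lemma pwug_scale:
  assumes "p_weak_ug \<mu> m p \<Gamma>s f \<rho>"
  shows "p_weak_ug \<mu> m p \<Gamma>s (\<lambda>z. ereal c * f z) (\<lambda>x. ennreal \<bar>c\<bar> * \<rho> x)"
proof -
  have m1: "\<rho> \<in> borel_measurable borel" using assms by (auto simp: pwug_iff)
  have "{P\<in>\<Gamma>s. \<not> ug_ineq (\<lambda>z. ereal c * f z) (start3 P) (end3 P) (path_int \<mu> P (\<lambda>x. ennreal \<bar>c\<bar> * \<rho> x))} \<subseteq>
        {P\<in>\<Gamma>s. \<not> ug_ineq f (start3 P) (end3 P) (path_int \<mu> P \<rho>)}"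
  proof -
    have "ug_ineq (\<lambda>z. ereal c * f z) (start3 P) (end3 P) (path_int \<mu> P (\<lambda>x. ennreal \<bar>c\<bar> * \<rho> x))"
      if "P\<in>\<Gamma>s" "ug_ineq f (start3 P) (end3 P) (path_int \<mu> P \<rho>)" for P
      using ug_scale[OF that(2), of c] path_int_cmult[OF that(1) m1] by simp
    then show ?thesis by blast
  qed
  then show ?thesis using assms m1 unfolding pwug_iff
    by (auto intro: null_mono)
qed

lemma null_empty: "null_fam {}"
  unfolding null_fam_def by (intro bexI[of _ "\<lambda>x. 0"]) auto

lemma pwug_zero: "p_weak_ug \<mu> m p \<Gamma>s (\<lambda>x. 0) (\<lambda>x. 0)"
proof -
  have "{P\<in>\<Gamma>s. \<not> ug_ineq (\<lambda>x. 0) (start3 P) (end3 P) (path_int \<mu> P (\<lambda>x. 0))} = {}"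
    by (auto simp: ug_ineq_def)
  then show ?thesis unfolding pwug_iff using null_empty by (simp only:) simp
qed

lemma Lp_ereal_GT:
  assumes m1: "h1 \<in> borel_measurable m" and m2: "h2 \<in> borel_measurable m"
    and le: "\<And>x. \<bar>h x\<bar> \<le> \<bar>h1 x\<bar> + \<bar>h2 x\<bar>"
  shows "Lp_norm_ereal m p h \<le> Lp_norm_ereal m p h1 + Lp_norm_ereal m p h2"
proof -
  have "Lp_norm_ereal m p h \<le> Lp_norm_enn m p (\<lambda>x. e2ennreal \<bar>h1 x\<bar> + e2ennreal \<bar>h2 x\<bar>)"
    unfolding Lp_norm_ereal_def using le p0 by (intro Lp_mono e2ennreal_abs_le)
  also have "\<dots> \<le> Lp_norm_ereal m p h1 + Lp_norm_ereal m p h2"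
    unfolding Lp_norm_ereal_def using m1 m2
    by (intro minkowski p) (auto intro!: measurable_compose[OF _ measurable_e2ennreal] borel_measurable_ereal_abs)
  finally show ?thesis .
qed

lemma Lp_ereal_scale:
  assumes "f \<in> borel_measurable m"
  shows "Lp_norm_ereal m p (\<lambda>x. ereal c * f x) = ennreal \<bar>c\<bar> * Lp_norm_ereal m p f"
proof -
  have z: "e2ennreal 0 = 0" using e2ennreal_ereal[of 0] by (simp add: zero_ereal_def)
  have "e2ennreal \<bar>ereal c * f x\<bar> = ennreal \<bar>c\<bar> * e2ennreal \<bar>f x\<bar>" for x
  proof (cases "f x")
    case (real r)
    then show ?thesis by (simp add: e2ennreal_ereal abs_mult ennreal_mult)
  next
    case PInf
    then show ?thesis using z by (cases "c = 0") (auto simp: ennreal_mult_top zero_ereal_def[symmetric] e2ennreal_infty)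
  next
    case MInf
    then show ?thesis using z by (cases "c = 0") (auto simp: ennreal_mult_top zero_ereal_def[symmetric] e2ennreal_infty)
  qed
  then show ?thesis unfolding Lp_norm_ereal_def using assms p0
    by (simp add: Lp_cmult)
qed

end


lemma ennreal_mult_INF:
  assumes d: "0 < d"
  shows "ennreal d * (INF i\<in>I. f i) = (INF i\<in>I. ennreal d * f i)"
proof (rule antisym)
  show "ennreal d * (INF i\<in>I. f i) \<le> (INF i\<in>I. ennreal d * f i)"
    by (intro INF_greatest mult_left_mono INF_lower) auto
  have inv: "ennreal (1/d) * (ennreal d * x) = x" for x
    using d by (simp add: mult.assoc[symmetric] ennreal_mult[symmetric])
  have "ennreal (1/d) * (INF i\<in>I. ennreal d * f i) \<le> f i" if "i \<in> I" for i
  proof -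
    have "ennreal (1/d) * (INF i\<in>I. ennreal d * f i) \<le> ennreal (1/d) * (ennreal d * f i)"
      using that by (intro mult_left_mono INF_lower) auto
    then show ?thesis by (simp add: inv)
  qed
  then have "ennreal (1/d) * (INF i\<in>I. ennreal d * f i) \<le> (INF i\<in>I. f i)"
    by (intro INF_greatest)
  then have "ennreal d * (ennreal (1/d) * (INF i\<in>I. ennreal d * f i)) \<le> ennreal d * (INF i\<in>I. f i)"
    by (intro mult_left_mono) auto
  moreover have "ennreal d * (ennreal (1/d) * x) = x" for x
    using d by (simp add: mult.assoc[symmetric] ennreal_mult[symmetric])
  ultimately show "(INF i\<in>I. ennreal d * f i) \<le> ennreal d * (INF i\<in>I. f i)" by simp
qed

lemma INF_two_le:
  fixes f :: "'b \<Rightarrow> ennreal" and g :: "'c \<Rightarrow> ennreal"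
  assumes N: "\<And>a b. a \<in> A \<Longrightarrow> b \<in> B \<Longrightarrow> N \<le> c + f a + g b"
  shows "N \<le> c + (INF a\<in>A. f a) + (INF b\<in>B. g b)"
proof (rule ennreal_le_epsilon)
  fix e :: real assume lt: "c + (INF a\<in>A. f a) + (INF b\<in>B. g b) < top" and e: "0 < e"
  have l1: "(INF a\<in>A. f a) \<le> c + (INF a\<in>A. f a) + (INF b\<in>B. g b)"
    by (metis add.commute add.left_commute le_iff_add)
  have l2: "(INF b\<in>B. g b) \<le> c + (INF a\<in>A. f a) + (INF b\<in>B. g b)"
    by (metis add.commute le_iff_add)
  have I1: "(INF a\<in>A. f a) \<noteq> \<infinity>" using le_less_trans[OF l1 lt] by (simp only: less_top infinity_ennreal_def)
  have I2: "(INF b\<in>B. g b) \<noteq> \<infinity>" using le_less_trans[OF l2 lt] by (simp only: less_top infinity_ennreal_def)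
  obtain a where a: "a \<in> A" "f a < (INF a\<in>A. f a) + ennreal (e/2)"
    using INF_approx_ennreal[OF _ refl I1, of "e/2"] e by auto
  obtain b where b: "b \<in> B" "g b < (INF b\<in>B. g b) + ennreal (e/2)"
    using INF_approx_ennreal[OF _ refl I2, of "e/2"] e by auto
  have "N \<le> c + f a + g b" using N a b by auto
  also have "\<dots> \<le> c + ((INF a\<in>A. f a) + ennreal (e/2)) + ((INF b\<in>B. g b) + ennreal (e/2))"
    using a b by (intro add_mono order_refl less_imp_le)
  also have "\<dots> = c + (INF a\<in>A. f a) + (INF b\<in>B. g b) + (ennreal (e/2) + ennreal (e/2))"
    by (simp add: ac_simps)
  also have "ennreal (e/2) + ennreal (e/2) = ennreal e"
    using e by (simp add: ennreal_plus[symmetric] del: ennreal_plus)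
  finally show "N \<le> c + (INF a\<in>A. f a) + (INF b\<in>B. g b) + ennreal e" .
qed

context NS
begin

lemma pwug_meas: "p_weak_ug \<mu> m p \<Gamma>s f \<rho> \<Longrightarrow> \<rho> \<in> borel_measurable m"
  by (auto simp: pwug_iff intro: meas_m)

lemma N1p_le: "p_weak_ug \<mu> m p \<Gamma>s f \<rho> \<Longrightarrow> N1p_norm \<mu> m p \<Gamma>s f \<le> Lp_norm_ereal m p f + Lp_norm_enn m p \<rho>"
  unfolding N1p_norm_def by (intro add_left_mono INF_lower) auto

lemma N1p_GT:
  assumes m1: "h1 \<in> borel_measurable m" and m2: "h2 \<in> borel_measurable m"
    and le: "\<And>x. \<bar>h x\<bar> \<le> \<bar>h1 x\<bar> + \<bar>h2 x\<bar>"
    and add: "\<And>z. \<bar>h1 z\<bar> \<noteq> \<infinity> \<Longrightarrow> \<bar>h2 z\<bar> \<noteq> \<infinity> \<Longrightarrow> h z = h1 z + h2 z"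
  shows "N1p_norm \<mu> m p \<Gamma>s h \<le> N1p_norm \<mu> m p \<Gamma>s h1 + N1p_norm \<mu> m p \<Gamma>s h2"
proof -
  let ?U1 = "{\<rho>. p_weak_ug \<mu> m p \<Gamma>s h1 \<rho>}" and ?U2 = "{\<rho>. p_weak_ug \<mu> m p \<Gamma>s h2 \<rho>}"
  let ?C = "Lp_norm_ereal m p h1 + Lp_norm_ereal m p h2"
  have "N1p_norm \<mu> m p \<Gamma>s h \<le> ?C + Lp_norm_enn m p \<rho>1 + Lp_norm_enn m p \<rho>2"
    if r1: "\<rho>1 \<in> ?U1" and r2: "\<rho>2 \<in> ?U2" for \<rho>1 \<rho>2
  proof -
    have "N1p_norm \<mu> m p \<Gamma>s h \<le> Lp_norm_ereal m p h + Lp_norm_enn m p (\<lambda>x. \<rho>1 x + \<rho>2 x)"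
      using r1 r2 by (intro N1p_le pwug_comb[OF _ _ add]) auto
    also have "\<dots> \<le> ?C + (Lp_norm_enn m p \<rho>1 + Lp_norm_enn m p \<rho>2)"
      using r1 r2 by (intro add_mono Lp_ereal_GT m1 m2 le minkowski p pwug_meas) auto
    finally show ?thesis by (simp add: ac_simps)
  qed
  then have "N1p_norm \<mu> m p \<Gamma>s h \<le> ?C + (INF \<rho>\<in>?U1. Lp_norm_enn m p \<rho>) + (INF \<rho>\<in>?U2. Lp_norm_enn m p \<rho>)"
    by (rule INF_two_le)
  then show ?thesis unfolding N1p_norm_def by (simp add: ac_simps)
qed

lemma N1p_zero: "N1p_norm \<mu> m p \<Gamma>s (\<lambda>x. 0) = 0"
proof -
  have "N1p_norm \<mu> m p \<Gamma>s (\<lambda>x. 0) \<le> Lp_norm_ereal m p (\<lambda>x. 0) + Lp_norm_enn m p (\<lambda>x. 0)"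
    by (intro N1p_le pwug_zero)
  moreover have "Lp_norm_ereal m p (\<lambda>x. 0) = 0"
    using Lp_zero[of m p] unfolding Lp_norm_ereal_def
    by (simp add: e2ennreal_ereal[of 0, simplified zero_ereal_def[symmetric]])
  ultimately show ?thesis by simp
qed

lemma ereal_inv_mult: assumes "c \<noteq> 0" shows "ereal (1/c) * (ereal c * a) = a"
proof -
  have "ereal (1/c) * (ereal c * a) = (ereal (1/c) * ereal c) * a" by (simp only: mult.assoc)
  also have "ereal (1/c) * ereal c = 1" using assms by (simp add: one_ereal_def)
  finally show ?thesis by simp
qed

lemma N1p_scale:
  assumes f: "f \<in> borel_measurable m"
  shows "N1p_norm \<mu> m p \<Gamma>s (\<lambda>x. ereal c * f x) = ennreal \<bar>c\<bar> * N1p_norm \<mu> m p \<Gamma>s f"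
proof (cases "c = 0")
  case True
  have "(\<lambda>x. ereal c * f x) = (\<lambda>x. 0)" using True by (simp add: zero_ereal_def[symmetric])
  then show ?thesis using True N1p_zero by simp
next
  case False
  let ?U = "{\<rho>. p_weak_ug \<mu> m p \<Gamma>s f \<rho>}" and ?V = "{\<rho>. p_weak_ug \<mu> m p \<Gamma>s (\<lambda>x. ereal c * f x) \<rho>}"
  have c: "0 < \<bar>c\<bar>" using False by simp
  have V: "?V = (\<lambda>\<rho> x. ennreal \<bar>c\<bar> * \<rho> x) ` ?U"
  proof (intro equalityI subsetI)
    fix \<rho> assume "\<rho> \<in> ?V"
    then have "p_weak_ug \<mu> m p \<Gamma>s (\<lambda>z. ereal (1/c) * (ereal c * f z)) (\<lambda>x. ennreal \<bar>1/c\<bar> * \<rho> x)"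
      by (intro pwug_scale) auto
    then have "(\<lambda>x. ennreal \<bar>1/c\<bar> * \<rho> x) \<in> ?U" using False by (simp add: ereal_inv_mult)
    moreover have "\<rho> = (\<lambda>x. ennreal \<bar>c\<bar> * (ennreal \<bar>1/c\<bar> * \<rho> x))"
      using False by (simp add: mult.assoc[symmetric] ennreal_mult[symmetric] abs_mult[symmetric])
    ultimately show "\<rho> \<in> (\<lambda>\<rho> x. ennreal \<bar>c\<bar> * \<rho> x) ` ?U"
      by (intro image_eqI[where x="\<lambda>x. ennreal \<bar>1/c\<bar> * \<rho> x"])
  qed (auto intro: pwug_scale)
  have "(INF \<rho>\<in>?V. Lp_norm_enn m p \<rho>) = (INF \<rho>\<in>?U. Lp_norm_enn m p (\<lambda>x. ennreal \<bar>c\<bar> * \<rho> x))"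
    unfolding V image_image ..
  also have "\<dots> = (INF \<rho>\<in>?U. ennreal \<bar>c\<bar> * Lp_norm_enn m p \<rho>)"
    by (intro INF_cong refl Lp_cmult p0 pwug_meas) auto
  also have "\<dots> = ennreal \<bar>c\<bar> * (INF \<rho>\<in>?U. Lp_norm_enn m p \<rho>)"
    using c by (rule ennreal_mult_INF[symmetric])
  finally show ?thesis unfolding N1p_norm_def using f
    by (simp add: Lp_ereal_scale distrib_left)
qed

lemma N1p_tilde_scale:
  assumes "f \<in> N1p_tilde \<mu> m p \<Gamma>s"
  shows "(\<lambda>x. ereal c * f x) \<in> N1p_tilde \<mu> m p \<Gamma>s"
proof -
  obtain \<rho> where f: "f \<in> borel_measurable m" "Lp_norm_ereal m p f < \<infinity>"
    and r: "p_weak_ug \<mu> m p \<Gamma>s f \<rho>" "Lp_norm_enn m p \<rho> < \<infinity>"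
    using assms unfolding N1p_tilde_def by blast
  have "Lp_norm_enn m p (\<lambda>x. ennreal \<bar>c\<bar> * \<rho> x) < \<infinity>"
    using r by (simp add: Lp_cmult p0 pwug_meas ennreal_mult_less_top)
  moreover have "Lp_norm_ereal m p (\<lambda>x. ereal c * f x) < \<infinity>"
    using f by (simp add: Lp_ereal_scale ennreal_mult_less_top)
  moreover have "(\<lambda>x. ereal c * f x) \<in> borel_measurable m" using f by measurable
  ultimately show ?thesis unfolding N1p_tilde_def using pwug_scale[OF r(1), of c] by blast
qed

lemma N1p_tilde_GT:
  assumes h: "h \<in> borel_measurable m"
    and h1: "h1 \<in> N1p_tilde \<mu> m p \<Gamma>s" and h2: "h2 \<in> N1p_tilde \<mu> m p \<Gamma>s"
    and le: "\<And>x. \<bar>h x\<bar> \<le> \<bar>h1 x\<bar> + \<bar>h2 x\<bar>"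
    and add: "\<And>z. \<bar>h1 z\<bar> \<noteq> \<infinity> \<Longrightarrow> \<bar>h2 z\<bar> \<noteq> \<infinity> \<Longrightarrow> h z = h1 z + h2 z"
  shows "h \<in> N1p_tilde \<mu> m p \<Gamma>s"
proof -
  obtain \<rho>1 where f1: "h1 \<in> borel_measurable m" "Lp_norm_ereal m p h1 < \<infinity>"
    and r1: "p_weak_ug \<mu> m p \<Gamma>s h1 \<rho>1" "Lp_norm_enn m p \<rho>1 < \<infinity>"
    using h1 unfolding N1p_tilde_def by blast
  obtain \<rho>2 where f2: "h2 \<in> borel_measurable m" "Lp_norm_ereal m p h2 < \<infinity>"
    and r2: "p_weak_ug \<mu> m p \<Gamma>s h2 \<rho>2" "Lp_norm_enn m p \<rho>2 < \<infinity>"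
    using h2 unfolding N1p_tilde_def by blast
  have "Lp_norm_ereal m p h \<le> Lp_norm_ereal m p h1 + Lp_norm_ereal m p h2"
    using f1 f2 le by (intro Lp_ereal_GT)
  also have "\<dots> < \<infinity>" using f1 f2 by simp
  finally have 1: "Lp_norm_ereal m p h < \<infinity>" .
  have "Lp_norm_enn m p (\<lambda>x. \<rho>1 x + \<rho>2 x) \<le> Lp_norm_enn m p \<rho>1 + Lp_norm_enn m p \<rho>2"
    using r1 r2 by (intro minkowski p pwug_meas)
  also have "\<dots> < \<infinity>" using r1 r2 by simp
  finally have 2: "Lp_norm_enn m p (\<lambda>x. \<rho>1 x + \<rho>2 x) < \<infinity>" .
  show ?thesis unfolding N1p_tilde_def using h 1 2 pwug_comb[OF r1(1) r2(1) add] by blast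
qed

lemma N1p_tilde_fin: "f \<in> N1p_tilde \<mu> m p \<Gamma>s \<Longrightarrow> N1p_norm \<mu> m p \<Gamma>s f < top"
  unfolding N1p_tilde_def by (auto dest!: N1p_le intro: le_less_trans)

lemma zero_in: "(\<lambda>x. 0) \<in> N1p_tilde \<mu> m p \<Gamma>s"
proof -
  have "Lp_norm_ereal m p (\<lambda>x. 0) = 0"
    using Lp_zero[of m p] unfolding Lp_norm_ereal_def
    by (simp add: e2ennreal_ereal[of 0, simplified zero_ereal_def[symmetric]])
  then show ?thesis unfolding N1p_tilde_def using pwug_zero by auto
qed

end


lemma ereal_diff_fin: "\<bar>a - b\<bar> \<noteq> (\<infinity>::ereal) \<Longrightarrow> \<bar>a\<bar> \<noteq> \<infinity> \<and> \<bar>b\<bar> \<noteq> \<infinity>"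
  by (cases a; cases b) auto

lemma ereal_tri: "\<bar>a - c\<bar> \<le> \<bar>a - b\<bar> + \<bar>b - (c::ereal)\<bar>"
  by (cases a; cases b; cases c) auto

lemma ereal_tri_eq: "\<bar>a - b\<bar> \<noteq> \<infinity> \<Longrightarrow> \<bar>b - c\<bar> \<noteq> \<infinity> \<Longrightarrow> a - c = (a - b) + (b - (c::ereal))"
  by (cases a; cases b; cases c) auto

context NS
begin

lemma null_sup:
  assumes "null_fam A" "\<And>P. P \<in> B \<Longrightarrow> \<exists>Q\<in>A. path_image3 Q \<subseteq> path_image3 P"
  shows "null_fam B"
proof -
  obtain g where g: "g \<in> borel_measurable borel" "Lp_norm_enn m p g < top" "\<forall>P\<in>A. path_int \<mu> P g = top"
    using assms(1) unfolding null_fam_def by blast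
  have "path_int \<mu> P g = top" if PB: "P \<in> B" for P
  proof -
    obtain Q where "Q \<in> A" "path_image3 Q \<subseteq> path_image3 P" using assms(2)[OF PB] by blast
    then have "path_int \<mu> Q g \<le> path_int \<mu> P g" by (rule_tac path_int_sub) auto
    then show ?thesis using g \<open>Q \<in> A\<close> by (simp add: top_unique)
  qed
  then show ?thesis unfolding null_fam_def using g by blast
qed

lemma space_m: "space m = UNIV" using sets_eq_imp_space_eq[OF sets_m] by simp

end

locale NSseq = NS +
  fixes v :: "nat \<Rightarrow> 'a \<Rightarrow> ereal" and R :: "nat \<Rightarrow> 'a \<Rightarrow> ennreal"
  assumes v_in: "\<And>k. v k \<in> N1p_tilde \<mu> m p \<Gamma>s"
    and R_ug: "\<And>k. p_weak_ug \<mu> m p \<Gamma>s (\<lambda>x. v (Suc k) x - v k x) (R k)"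
    and R_small: "\<And>k. Lp_norm_enn m p (R k) \<le> ennreal ((1/2)^k)"
    and d_small: "\<And>k. Lp_norm_ereal m p (\<lambda>x. v (Suc k) x - v k x) \<le> ennreal ((1/2)^k)"
begin

definition "d k x = v (Suc k) x - v k x"
definition "a k x = e2ennreal \<bar>d k x\<bar>"
definition "S x = (\<Sum>k. a k x)"
definition "Nset = {x. S x = top}"
definition "w k x = (if S x = top then 0 else real_of_ereal (d k x))"
definition "fr x = (if S x = top then 0 else real_of_ereal (v 0 x)) + (\<Sum>k. w k x)"
definition "f x = ereal (fr x)"
definition "Rt k x = (\<Sum>i. R (i+k) x)"

lemma v_meas: "v k \<in> borel_measurable borel"
  using v_in[of k] unfolding N1p_tilde_def by (auto simp: meas_m_iff)

lemma d_meas: "d k \<in> borel_measurable borel"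
  unfolding d_def using v_meas by measurable

lemma a_meas: "a k \<in> borel_measurable borel"
  unfolding a_def using d_meas by measurable

lemma S_meas: "S \<in> borel_measurable borel"
  unfolding S_def using a_meas by measurable

lemma Nset_sets: "Nset \<in> sets borel"
proof -
  have "{x \<in> space borel. S x = top} \<in> sets borel" using S_meas by measurable
  then show ?thesis by (simp add: Nset_def)
qed

lemma w_meas: "w k \<in> borel_measurable borel"
proof -
  have "{x \<in> space borel. S x = top} \<in> sets borel" using S_meas by measurable
  moreover have "(\<lambda>x. real_of_ereal (d k x)) \<in> borel_measurable borel" using d_meas by measurable
  ultimately show ?thesis unfolding w_def by (intro measurable_If) auto
qed

lemma R_meas: "R k \<in> borel_measurable borel"
  using R_ug[of k] by (simp add: pwug_iff)

lemma Rt_meas: "Rt k \<in> borel_measurable borel"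
  unfolding Rt_def using R_meas by measurable

lemma a_Lp: "Lp_norm_enn m p (a k) \<le> ennreal ((1/2)^k)"
  using d_small[of k] unfolding Lp_norm_ereal_def a_def d_def .

lemma sum_Lp_bound:
  assumes "\<And>i. g i \<in> borel_measurable borel" "\<And>i. Lp_norm_enn m p (g i) \<le> ennreal ((1/2)^i)"
  shows "Lp_norm_enn m p (\<lambda>x. \<Sum>i. g (i+k) x) \<le> ennreal (2 * (1/2)^k)"
proof -
  have "Lp_norm_enn m p (\<lambda>x. \<Sum>i. g (i+k) x) \<le> (\<Sum>i. Lp_norm_enn m p (g (i+k)))"
    by (rule minkowski_suminf[OF p]) (rule meas_m, rule assms)
  also have "\<dots> \<le> (\<Sum>i. ennreal (1 * (1/2)^(i+k)))"
    by (rule suminf_le) (use assms in auto)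
  also have "\<dots> = ennreal (2 * 1 * (1/2)^k)" by (rule geom_ennreal) simp
  finally show ?thesis by simp
qed

lemma S_Lp: "Lp_norm_enn m p S < top"
proof -
  have "Lp_norm_enn m p S \<le> ennreal (2 * (1/2)^0)"
    unfolding S_def using sum_Lp_bound[of a 0, OF a_meas a_Lp] by simp
  then show ?thesis using le_less_trans[of _ "ennreal 2" top] by simp
qed

lemma Rt_Lp: "Lp_norm_enn m p (Rt k) \<le> ennreal (2 * (1/2)^k)"
  unfolding Rt_def using sum_Lp_bound[of R k, OF R_meas R_small] .

lemma Nset_null: "Nset \<in> null_sets m"
proof -
  have "AE x in m. S x < top"
    using Lp_fin_AE[OF p0 _ S_Lp] S_meas meas_m by auto
  moreover have "Nset \<in> sets m" using Nset_sets sets_m by simp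
  moreover have "{x \<in> space m. \<not> S x < top} = Nset" unfolding space_m Nset_def using top.not_eq_extremum by blast
  ultimately show ?thesis using AE_iff_measurable[of Nset m "\<lambda>x. S x < top"] by auto
qed

lemma AE_good: "AE x in m. x \<notin> Nset"
  using AE_not_in[OF Nset_null] .

lemma notN: "x \<notin> Nset \<longleftrightarrow> S x \<noteq> top"
  by (simp add: Nset_def)

lemma fin_d: assumes x: "x \<notin> Nset" shows "\<bar>d k x\<bar> \<noteq> \<infinity>"
proof
  assume "\<bar>d k x\<bar> = \<infinity>"
  then have "a k x = top" unfolding a_def by (simp only: e2ennreal_infty)
  moreover have "a k x \<le> S x" unfolding S_def by (rule ennreal_suminf_upper)
  ultimately have "S x = top" by (simp add: top_unique)
  then show False using x notN by blast
qed

lemma fin_v: assumes x: "x \<notin> Nset" shows "\<bar>v k x\<bar> \<noteq> \<infinity>"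
proof (cases k)
  case 0
  have h: "\<bar>v (Suc 0) x - v 0 x\<bar> \<noteq> \<infinity>" using fin_d[OF x, of 0] unfolding d_def .
  show ?thesis using ereal_diff_fin[OF h] 0 by simp
next
  case (Suc j)
  have h: "\<bar>v (Suc j) x - v j x\<bar> \<noteq> \<infinity>" using fin_d[OF x, of j] unfolding d_def .
  show ?thesis using ereal_diff_fin[OF h] Suc by simp
qed

lemma w_eq': assumes x: "x \<notin> Nset" shows "w k x = real_of_ereal (d k x)"
  using x unfolding notN w_def by simp

lemma w_eq: assumes x: "x \<notin> Nset" shows "w k x = real_of_ereal (v (Suc k) x) - real_of_ereal (v k x)"
  unfolding w_eq'[OF x] d_def using fin_v[OF x, of k] fin_v[OF x, of "Suc k"]
  by (simp only: real_of_ereal_minus if_False simp_thms)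

lemma d_eq: assumes x: "x \<notin> Nset" shows "d k x = ereal (w k x)"
  unfolding w_eq'[OF x] using fin_d[OF x, of k] by (metis ereal_fin_obtain real_of_ereal.simps(1))

lemma a_eq: assumes x: "x \<notin> Nset" shows "a k x = ennreal \<bar>w k x\<bar>"
  unfolding a_def d_eq[OF x] by (simp only: abs_ereal.simps e2ennreal_ereal)

lemma summable_w: "summable (\<lambda>k. \<bar>w k x\<bar>)"
proof (cases "x \<in> Nset")
  case True
  then show ?thesis by (simp add: w_def Nset_def)
next
  case False
  have "S x = (\<Sum>k. ennreal \<bar>w k x\<bar>)" unfolding S_def using a_eq[OF False] by simp
  then have "(\<Sum>k. ennreal \<bar>w k x\<bar>) \<noteq> top"
    using False by (simp add: Nset_def)
  then show ?thesis by (intro summable_suminf_not_top) auto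
qed

lemma summable_w': "summable (\<lambda>k. w k x)"
  using summable_rabs_cancel[OF summable_w] .

lemma partial: "x \<notin> Nset \<Longrightarrow> real_of_ereal (v k x) = real_of_ereal (v 0 x) + (\<Sum>i<k. w i x)"
  by (induction k) (auto simp: w_eq)

lemma tail: "x \<notin> Nset \<Longrightarrow> fr x - real_of_ereal (v k x) = (\<Sum>i. w (i+k) x)"
  using partial[of x k] suminf_minus_initial_segment[OF summable_w'[of x], of k]
  by (simp add: fr_def Nset_def)

lemma vf_eq: "x \<notin> Nset \<Longrightarrow> v k x - f x = ereal (- (\<Sum>i. w (i+k) x))"
proof -
  assume x: "x \<notin> Nset"
  obtain r where r: "v k x = ereal r" using fin_v[OF x] by (metis ereal_fin_obtain)
  then have "v k x - f x = ereal (real_of_ereal (v k x) - fr x)" by (simp add: f_def)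
  then show ?thesis using tail[OF x, of k] by simp
qed

lemma summable_shift: "summable (\<lambda>i. \<bar>w (i+k) x\<bar>)"
  using summable_w[of x] by (subst summable_iff_shift[of "\<lambda>i. \<bar>w i x\<bar>" k])

lemma vf_abs_le: "x \<notin> Nset \<Longrightarrow> e2ennreal \<bar>v k x - f x\<bar> \<le> (\<Sum>i. a (i+k) x)"
proof -
  assume x: "x \<notin> Nset"
  have "e2ennreal \<bar>v k x - f x\<bar> = ennreal \<bar>\<Sum>i. w (i+k) x\<bar>"
    using vf_eq[OF x, of k] by (simp add: e2ennreal_ereal)
  also have "\<dots> \<le> ennreal (\<Sum>i. \<bar>w (i+k) x\<bar>)"
    by (intro ennreal_leI summable_rabs summable_shift)
  also have "\<dots> = (\<Sum>i. ennreal \<bar>w (i+k) x\<bar>)"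
    by (rule suminf_ennreal2[symmetric]) (auto intro: summable_shift)
  also have "\<dots> = (\<Sum>i. a (i+k) x)" using a_eq[OF x] by simp
  finally show ?thesis .
qed

lemma Lp_vf: "Lp_norm_ereal m p (\<lambda>x. v k x - f x) \<le> ennreal (2 * (1/2)^k)"
proof -
  have "Lp_norm_ereal m p (\<lambda>x. v k x - f x) \<le> Lp_norm_enn m p (\<lambda>x. \<Sum>i. a (i+k) x)"
    unfolding Lp_norm_ereal_def using AE_good
    by (intro Lp_mono_AE p0) (auto elim!: eventually_mono intro: vf_abs_le)
  also have "\<dots> \<le> ennreal (2 * (1/2)^k)"
    using sum_Lp_bound[of a k, OF a_meas a_Lp] .
  finally show ?thesis .
qed

lemma fr_meas: "fr \<in> borel_measurable borel"
proof -
  have "{x \<in> space borel. S x = top} \<in> sets borel" using S_meas by measurable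
  moreover have "(\<lambda>x. real_of_ereal (v 0 x)) \<in> borel_measurable borel" using v_meas by measurable
  ultimately have "(\<lambda>x. if S x = top then 0 else real_of_ereal (v 0 x)) \<in> borel_measurable borel"
    by (intro measurable_If) auto
  moreover have "(\<lambda>x. \<Sum>k. w k x) \<in> borel_measurable borel"
  proof (rule borel_measurable_LIMSEQ_real)
    show "(\<lambda>n. \<Sum>k<n. w k x) \<longlonglongrightarrow> (\<Sum>k. w k x)" for x
      using summable_w' by (intro summable_LIMSEQ)
  qed (use w_meas in auto)
  ultimately show ?thesis unfolding fr_def by measurable
qed

lemma f_meas: "f \<in> borel_measurable borel"
  unfolding f_def using fr_meas by measurable

end


lemma ereal_neg_aux1: "\<bar>b\<bar> \<noteq> \<infinity> \<Longrightarrow> \<bar>b\<bar> \<le> \<bar>a\<bar> + \<bar>ereal (-1) * (a - b)\<bar>"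
  by (cases a; cases b) auto

lemma ereal_neg_aux2: "\<bar>a\<bar> \<noteq> \<infinity> \<Longrightarrow> \<bar>b\<bar> \<noteq> \<infinity> \<Longrightarrow> b = a + ereal (-1) * (a - (b::ereal))"
  by (cases a; cases b) auto

context NSseq
begin

definition "B1 k = {P\<in>\<Gamma>s. \<not> ug_ineq (d k) (start3 P) (end3 P) (path_int \<mu> P (R k))}"
definition "B1' k = {P\<in>\<Gamma>s. \<exists>Q\<in>B1 k. path_image3 Q \<subseteq> path_image3 P}"
definition "B2 = {P\<in>\<Gamma>s. path_int \<mu> P (Rt 0) = top}"
definition "B3 = {P\<in>\<Gamma>s. emeasure \<mu> (path_image3 P \<inter> Nset) \<noteq> 0}"
definition "Bad = (\<Union>k. B1' k) \<union> B2 \<union> B3"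

lemma d_fun: "d k = (\<lambda>x. v (Suc k) x - v k x)"
  by (rule ext) (simp add: d_def)

lemma B1_null: "null_fam (B1 k)"
  using R_ug[of k] unfolding pwug_iff B1_def d_fun by simp

lemma B1'_null: "null_fam (B1' k)"
  by (rule null_sup[OF B1_null]) (auto simp: B1'_def)

lemma B2_null: "null_fam B2"
proof -
  have "Lp_norm_enn m p (Rt 0) \<le> ennreal (2 * (1/2)^0)" by (rule Rt_Lp)
  then have "Lp_norm_enn m p (Rt 0) < top" using le_less_trans[of _ "ennreal 2" top] by simp
  then show ?thesis unfolding null_fam_def B2_def using Rt_meas by blast
qed

lemma B3_null: "null_fam B3"
proof -
  define g where "g x = (top::ennreal) * indicator Nset x" for x :: 'a
  have gm: "g \<in> borel_measurable borel" unfolding g_def using Nset_sets by measurable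
  have "(\<lambda>x. enn_powr (g x) p) = (\<lambda>x. top * indicator Nset x)"
    by (rule ext) (simp add: g_def split: split_indicator)
  then have "(\<integral>\<^sup>+x. enn_powr (g x) p \<partial>m) = (\<integral>\<^sup>+x. top * indicator Nset x \<partial>m)" by simp
  also have "\<dots> = top * emeasure m Nset"
    using Nset_null by (intro nn_integral_cmult_indicator) auto
  also have "emeasure m Nset = 0" using Nset_null by auto
  finally have "Lp_norm_enn m p g = 0" by (simp add: Lp_norm_enn_def)
  moreover have "path_int \<mu> P g = top" if P: "P \<in> B3" for P
  proof -
    have PG: "P \<in> \<Gamma>s" and ne: "emeasure \<mu> (path_image3 P \<inter> Nset) \<noteq> 0"
      using P by (auto simp: B3_def)
    have "path_image3 P \<inter> Nset \<in> sets \<mu>"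
      using image_sets[OF PG] Nset_sets sets_mu by auto
    have eq: "(\<lambda>x. g x * indicator (path_image3 P) x) = (\<lambda>x. top * indicator (path_image3 P \<inter> Nset) x)"
      by (rule ext) (simp add: g_def split: split_indicator)
    have "path_int \<mu> P g = (\<integral>\<^sup>+x. top * indicator (path_image3 P \<inter> Nset) x \<partial>\<mu>)"
      unfolding path_int_def eq ..
    also have "\<dots> = top * emeasure \<mu> (path_image3 P \<inter> Nset)"
      by (rule nn_integral_cmult_indicator) fact
    also have "\<dots> = top" using ne by (simp add: ennreal_top_mult)
    finally show ?thesis .
  qed
  ultimately show ?thesis unfolding null_fam_def using gm by (intro bexI[of _ g]) auto
qed

lemma Bad_null: "null_fam Bad"
proof -
  have "null_fam (\<Union>k. B1' k)" by (rule null_UN[OF _ B1'_null]) (auto simp: B1'_def)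
  then show ?thesis unfolding Bad_def by (intro null_Un B2_null B3_null)
qed

lemma Rk_le: "path_int \<mu> P (R k) \<le> path_int \<mu> P (Rt 0)"
  unfolding Rt_def by (intro path_int_mono) (use ennreal_suminf_upper in simp)

end

context NSseq
begin

lemma good_seg:
  assumes P: "P \<in> \<Gamma>s" "P \<notin> Bad" and Q: "Q \<in> \<Gamma>s" "path_image3 Q \<subseteq> path_image3 P"
  shows "\<bar>d k (start3 Q)\<bar> \<noteq> \<infinity> \<and> \<bar>d k (end3 Q)\<bar> \<noteq> \<infinity> \<and>
    ennreal \<bar>real_of_ereal (d k (start3 Q)) - real_of_ereal (d k (end3 Q))\<bar> \<le> path_int \<mu> P (R k)"
proof -
  have "Q \<notin> B1 k" using P Q by (auto simp: Bad_def B1'_def)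
  then have u: "ug_ineq (d k) (start3 Q) (end3 Q) (path_int \<mu> Q (R k))" using Q by (simp add: B1_def)
  have le: "path_int \<mu> Q (R k) \<le> path_int \<mu> P (R k)" using Q by (rule_tac path_int_sub) auto
  have "path_int \<mu> P (Rt 0) \<noteq> top" using P unfolding Bad_def B2_def by blast
  then have "path_int \<mu> P (Rt 0) < top" using top.not_eq_extremum by blast
  then have "path_int \<mu> Q (R k) < top" using le Rk_le[of P k] by (meson le_less_trans)
  from ug_fin[OF u this] le show ?thesis by auto
qed

lemma a_fin: "\<bar>d k u\<bar> \<noteq> \<infinity> \<Longrightarrow> a k u = ennreal \<bar>real_of_ereal (d k u)\<bar>"
  unfolding a_def by (metis ereal_fin_obtain abs_ereal.simps(1) e2ennreal_ereal real_of_ereal.simps(1))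

lemma tri_aux: "\<bar>r'::real\<bar> \<le> \<bar>r\<bar> + \<bar>r' - r\<bar>" by arith

lemma transfer:
  assumes P: "P \<in> \<Gamma>s" "P \<notin> Bad" and Q: "Q \<in> \<Gamma>s" "path_image3 Q \<subseteq> path_image3 P"
    and uu: "(u = start3 Q \<and> u' = end3 Q) \<or> (u = end3 Q \<and> u' = start3 Q)"
    and Su: "u \<notin> Nset"
  shows "u' \<notin> Nset"
proof -
  have ak: "a k u' \<le> a k u + path_int \<mu> P (R k)" for k
  proof -
    have g: "\<bar>d k u\<bar> \<noteq> \<infinity>" "\<bar>d k u'\<bar> \<noteq> \<infinity>"
        "ennreal \<bar>real_of_ereal (d k u') - real_of_ereal (d k u)\<bar> \<le> path_int \<mu> P (R k)"
      using good_seg[OF P Q, of k] uu by (auto simp: abs_minus_commute)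
    have "a k u' = ennreal \<bar>real_of_ereal (d k u')\<bar>" using a_fin[OF g(2)] .
    also have "\<dots> \<le> ennreal (\<bar>real_of_ereal (d k u)\<bar> + \<bar>real_of_ereal (d k u') - real_of_ereal (d k u)\<bar>)"
      by (intro ennreal_leI) (rule tri_aux)
    also have "\<dots> = ennreal \<bar>real_of_ereal (d k u)\<bar> + ennreal \<bar>real_of_ereal (d k u') - real_of_ereal (d k u)\<bar>"
      by (intro ennreal_plus abs_ge_zero)
    also have "\<dots> \<le> a k u + path_int \<mu> P (R k)"
      using a_fin[OF g(1)] g(3) by (intro add_mono) auto
    finally show ?thesis .
  qed
  have "S u' \<le> (\<Sum>k. a k u + path_int \<mu> P (R k))"
    unfolding S_def by (intro suminf_le ak) auto
  also have "\<dots> = S u + (\<Sum>k. path_int \<mu> P (R k))"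
    unfolding S_def by (rule suminf_add[symmetric]) auto
  also have "(\<Sum>k. path_int \<mu> P (R k)) = path_int \<mu> P (Rt 0)"
    unfolding Rt_def using P R_meas by (subst path_int_suminf) auto
  also have "S u + path_int \<mu> P (Rt 0) < top"
  proof -
    have "path_int \<mu> P (Rt 0) \<noteq> top" using P unfolding Bad_def B2_def by blast
    moreover have "S u \<noteq> top" using Su notN by blast
    ultimately show ?thesis by (simp add: less_top[symmetric])
  qed
  finally show ?thesis using notN top.not_eq_extremum by blast
qed

lemma good_ends:
  assumes P: "P \<in> \<Gamma>s" "P \<notin> Bad"
  shows "start3 P \<notin> Nset" "end3 P \<notin> Nset"
proof -
  obtain a0 b0 \<gamma> where Pe: "P = (a0, b0, \<gamma>)" by (cases P) auto
  have ab: "a0 < b0" and pos: "0 < emeasure \<mu> (\<gamma> ` {a0..b0})"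
    using P(1) sub Pe by (auto simp: Gamma_mu_def)
  have im: "path_image3 P = \<gamma> ` {a0..b0}" by (simp add: Pe path_image3_def)
  have z0: "emeasure \<mu> (\<gamma> ` {a0..b0} \<inter> Nset) = 0"
    using P by (auto simp: Bad_def B3_def im)
  have "\<exists>t\<in>{a0..b0}. \<gamma> t \<notin> Nset"
  proof (rule ccontr)
    assume "\<not> ?thesis"
    then have "\<gamma> ` {a0..b0} \<inter> Nset = \<gamma> ` {a0..b0}" by auto
    then show False using z0 pos by simp
  qed
  then obtain t where t: "a0 \<le> t" "t \<le> b0" "\<gamma> t \<notin> Nset" by auto
  show "start3 P \<notin> Nset"
  proof (cases "t = a0")
    case True
    then show ?thesis using t by (simp add: Pe start3_def)
  next
    case False
    then have Q: "(a0, t, \<gamma>) \<in> \<Gamma>s" using t P(1) Pe subpath_closed by auto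
    have "path_image3 (a0, t, \<gamma>) \<subseteq> path_image3 P" unfolding im using t by (auto simp: path_image3_def)
    from transfer[OF P Q this, of "\<gamma> t" "\<gamma> a0"] t show ?thesis
      by (simp add: start3_def end3_def Pe)
  qed
  show "end3 P \<notin> Nset"
  proof (cases "t = b0")
    case True
    then show ?thesis using t by (simp add: Pe end3_def)
  next
    case False
    then have Q: "(t, b0, \<gamma>) \<in> \<Gamma>s" using t P(1) Pe subpath_closed by auto
    have "path_image3 (t, b0, \<gamma>) \<subseteq> path_image3 P" unfolding im using t by (auto simp: path_image3_def)
    from transfer[OF P Q this, of "\<gamma> t" "\<gamma> b0"] t show ?thesis
      by (simp add: start3_def end3_def Pe)
  qed
qed

lemma good_w:
  assumes P: "P \<in> \<Gamma>s" "P \<notin> Bad"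
  shows "ennreal \<bar>w k (start3 P) - w k (end3 P)\<bar> \<le> path_int \<mu> P (R k)"
  using good_seg[OF P P(1) order_refl, of k] w_eq'[OF good_ends(1)[OF P]] w_eq'[OF good_ends(2)[OF P]]
  by simp

lemma vf_ug:
  assumes P: "P \<in> \<Gamma>s" "P \<notin> Bad"
  shows "ug_ineq (\<lambda>x. v k x - f x) (start3 P) (end3 P) (path_int \<mu> P (Rt k))"
proof -
  let ?x = "start3 P" and ?y = "end3 P"
  have x: "?x \<notin> Nset" and y: "?y \<notin> Nset" using good_ends[OF P] by auto
  let ?D = "\<lambda>i. w (i+k) ?y - w (i+k) ?x"
  have sD: "summable (\<lambda>i. \<bar>?D i\<bar>)"
  proof (rule summable_rabs_comparison_test)
    show "\<exists>N. \<forall>n\<ge>N. \<bar>?D n\<bar> \<le> \<bar>w (n+k) ?y\<bar> + \<bar>w (n+k) ?x\<bar>" by auto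
    show "summable (\<lambda>n. \<bar>w (n+k) ?y\<bar> + \<bar>w (n+k) ?x\<bar>)"
      by (intro summable_add summable_shift)
  qed
  have eq: "- (\<Sum>i. w (i+k) ?x) - - (\<Sum>i. w (i+k) ?y) = (\<Sum>i. ?D i)"
    using suminf_diff[OF summable_rabs_cancel[OF summable_shift[of k ?y]] summable_rabs_cancel[OF summable_shift[of k ?x]]]
    by simp
  have "ennreal \<bar>\<Sum>i. ?D i\<bar> \<le> ennreal (\<Sum>i. \<bar>?D i\<bar>)"
    by (intro ennreal_leI summable_rabs sD)
  also have "\<dots> = (\<Sum>i. ennreal \<bar>?D i\<bar>)"
    by (rule suminf_ennreal2[symmetric]) (auto intro: sD)
  also have "\<dots> \<le> (\<Sum>i. path_int \<mu> P (R (i+k)))"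
    using good_w[OF P] by (intro suminf_le) (auto simp: abs_minus_commute)
  also have "\<dots> = path_int \<mu> P (Rt k)"
    unfolding Rt_def using P R_meas by (subst path_int_suminf) auto
  finally have "ennreal \<bar>\<Sum>i. ?D i\<bar> \<le> path_int \<mu> P (Rt k)" .
  then show ?thesis using vf_eq[OF x, of k] vf_eq[OF y, of k] eq
    by (intro ug_intro) auto
qed

lemma vf_pwug: "p_weak_ug \<mu> m p \<Gamma>s (\<lambda>x. v k x - f x) (Rt k)"
proof -
  have "{P\<in>\<Gamma>s. \<not> ug_ineq (\<lambda>x. v k x - f x) (start3 P) (end3 P) (path_int \<mu> P (Rt k))} \<subseteq> Bad"
    using vf_ug by blast
  then show ?thesis unfolding pwug_iff using Rt_meas Bad_null null_mono by blast
qed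

lemma vf_N1p: "N1p_norm \<mu> m p \<Gamma>s (\<lambda>x. v k x - f x) \<le> ennreal (4 * (1/2)^k)"
proof -
  have "N1p_norm \<mu> m p \<Gamma>s (\<lambda>x. v k x - f x) \<le> Lp_norm_ereal m p (\<lambda>x. v k x - f x) + Lp_norm_enn m p (Rt k)"
    by (rule N1p_le[OF vf_pwug])
  also have "\<dots> \<le> ennreal (2 * (1/2)^k) + ennreal (2 * (1/2)^k)"
    by (intro add_mono Lp_vf Rt_Lp)
  also have "\<dots> = ennreal (4 * (1/2)^k)" by (simp add: ennreal_plus[symmetric] del: ennreal_plus)
  finally show ?thesis .
qed

lemma vf_in: "(\<lambda>x. v k x - f x) \<in> N1p_tilde \<mu> m p \<Gamma>s"
proof -
  have m1: "(\<lambda>x. v k x - f x) \<in> borel_measurable m"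
    using v_meas[of k] f_meas by (intro meas_m) measurable
  have "Lp_norm_ereal m p (\<lambda>x. v k x - f x) < top"
    using Lp_vf[of k] le_less_trans[of _ "ennreal (2 * (1/2)^k)" top] by simp
  moreover have "Lp_norm_enn m p (Rt k) < top"
    using Rt_Lp[of k] le_less_trans[of _ "ennreal (2 * (1/2)^k)" top] by simp
  ultimately show ?thesis unfolding N1p_tilde_def using m1 vf_pwug by auto
qed

lemma f_in: "f \<in> N1p_tilde \<mu> m p \<Gamma>s"
proof (rule N1p_tilde_GT)
  show "f \<in> borel_measurable m" using f_meas by (rule meas_m)
  show "v 0 \<in> N1p_tilde \<mu> m p \<Gamma>s" by (rule v_in)
  show "(\<lambda>x. ereal (-1) * (v 0 x - f x)) \<in> N1p_tilde \<mu> m p \<Gamma>s"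
    by (rule N1p_tilde_scale[OF vf_in])
  have ff: "\<bar>f x\<bar> \<noteq> \<infinity>" for x by (simp add: f_def)
  show "\<bar>f x\<bar> \<le> \<bar>v 0 x\<bar> + \<bar>ereal (-1) * (v 0 x - f x)\<bar>" for x
    using ereal_neg_aux1[OF ff] .
  show "f z = v 0 z + ereal (-1) * (v 0 z - f z)" if "\<bar>v 0 z\<bar> \<noteq> \<infinity>" for z
    using ereal_neg_aux2[OF that ff] .
qed

end


context NS
begin

lemma completeness:
  assumes F: "\<And>n. F n \<in> N1p_tilde \<mu> m p \<Gamma>s"
    and C: "\<forall>\<epsilon>>0. \<exists>N. \<forall>i\<ge>N. \<forall>j\<ge>N. N1p_norm \<mu> m p \<Gamma>s (\<lambda>x. F i x - F j x) < ennreal \<epsilon>"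
  shows "\<exists>f\<in>N1p_tilde \<mu> m p \<Gamma>s. (\<lambda>n. N1p_norm \<mu> m p \<Gamma>s (\<lambda>x. F n x - f x)) \<longlonglongrightarrow> 0"
proof -
  have "\<forall>k::nat. \<exists>N. \<forall>i\<ge>N. \<forall>j\<ge>N. N1p_norm \<mu> m p \<Gamma>s (\<lambda>x. F i x - F j x) < ennreal ((1/2)^k)"
    using C by simp
  then obtain Nf where Nf: "\<And>k i j. Nf k \<le> i \<Longrightarrow> Nf k \<le> j \<Longrightarrow>
      N1p_norm \<mu> m p \<Gamma>s (\<lambda>x. F i x - F j x) < ennreal ((1/2)^k)"
    by metis
  define n where "n k = (\<Sum>i\<le>k. Nf i)" for k
  have n_ge: "Nf k \<le> n k" for k unfolding n_def by (rule member_le_sum) auto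
  have n_mono: "n k \<le> n (Suc k)" for k unfolding n_def by simp
  define v where "v k = F (n k)" for k
  have small: "N1p_norm \<mu> m p \<Gamma>s (\<lambda>x. v (Suc k) x - v k x) < ennreal ((1/2)^k)" for k
    unfolding v_def using n_ge[of k] n_mono[of k] by (intro Nf) auto
  have "\<exists>\<rho>. p_weak_ug \<mu> m p \<Gamma>s (\<lambda>x. v (Suc k) x - v k x) \<rho> \<and> Lp_norm_enn m p \<rho> \<le> ennreal ((1/2)^k)" for k
  proof -
    have "(INF \<rho>\<in>{\<rho>. p_weak_ug \<mu> m p \<Gamma>s (\<lambda>x. v (Suc k) x - v k x) \<rho>}. Lp_norm_enn m p \<rho>)
          \<le> N1p_norm \<mu> m p \<Gamma>s (\<lambda>x. v (Suc k) x - v k x)"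
      unfolding N1p_norm_def by simp
    then have "(INF \<rho>\<in>{\<rho>. p_weak_ug \<mu> m p \<Gamma>s (\<lambda>x. v (Suc k) x - v k x) \<rho>}. Lp_norm_enn m p \<rho>) < ennreal ((1/2)^k)"
      using small[of k] by (rule le_less_trans)
    then show ?thesis unfolding INF_less_iff by (auto intro: less_imp_le)
  qed
  then obtain R where R: "\<And>k. p_weak_ug \<mu> m p \<Gamma>s (\<lambda>x. v (Suc k) x - v k x) (R k)"
    "\<And>k. Lp_norm_enn m p (R k) \<le> ennreal ((1/2)^k)"
    by metis
  have dsm: "Lp_norm_ereal m p (\<lambda>x. v (Suc k) x - v k x) \<le> ennreal ((1/2)^k)" for k
  proof -
    have "Lp_norm_ereal m p (\<lambda>x. v (Suc k) x - v k x) \<le> N1p_norm \<mu> m p \<Gamma>s (\<lambda>x. v (Suc k) x - v k x)"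
      unfolding N1p_norm_def by simp
    then show ?thesis using small[of k] by simp
  qed
  interpret S: NSseq \<mu> m p \<Gamma>s v R
  proof unfold_locales
    show "v k \<in> N1p_tilde \<mu> m p \<Gamma>s" for k by (simp add: v_def F)
  qed (fact R dsm)+
  have conv: "(\<lambda>n. N1p_norm \<mu> m p \<Gamma>s (\<lambda>x. F n x - S.f x)) \<longlonglongrightarrow> 0"
    unfolding order_tendsto_iff
  proof (intro conjI allI impI)
    fix l :: ennreal assume "l < 0" then show "\<forall>\<^sub>F x in sequentially. l < N1p_norm \<mu> m p \<Gamma>s (\<lambda>xa. F x xa - S.f xa)"
      by simp
  next
    fix u :: ennreal assume u: "0 < u"
    obtain e where e: "0 < e" "ennreal e \<le> u"
    proof (cases "u = top")
      case True
      then show ?thesis using that[of 1] by simp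
    next
      case False
      then obtain r where "u = ennreal r" "0 \<le> r" by (cases u rule: enn_powr_cases) auto
      then show ?thesis using that[of r] u by auto
    qed
    obtain k where k: "(1/2::real)^k < e/5" using real_arch_pow_inv[of "e/5" "1/2"] e by auto
    have "N1p_norm \<mu> m p \<Gamma>s (\<lambda>x. F i x - S.f x) < u" if i: "Nf k \<le> i" for i
    proof -
      have "N1p_norm \<mu> m p \<Gamma>s (\<lambda>x. F i x - S.f x) \<le>
            N1p_norm \<mu> m p \<Gamma>s (\<lambda>x. F i x - v k x) + N1p_norm \<mu> m p \<Gamma>s (\<lambda>x. v k x - S.f x)"
      proof (rule N1p_GT)
        have "F i \<in> borel_measurable m" "v k \<in> borel_measurable m" "S.f \<in> borel_measurable m"
          using F[of i] S.v_in[of k] S.f_in unfolding N1p_tilde_def by auto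
        then show "(\<lambda>x. F i x - v k x) \<in> borel_measurable m" "(\<lambda>x. v k x - S.f x) \<in> borel_measurable m"
          by measurable
        show "\<bar>F i x - S.f x\<bar> \<le> \<bar>F i x - v k x\<bar> + \<bar>v k x - S.f x\<bar>" for x by (rule ereal_tri)
        show "F i z - S.f z = (F i z - v k z) + (v k z - S.f z)"
          if "\<bar>F i z - v k z\<bar> \<noteq> \<infinity>" "\<bar>v k z - S.f z\<bar> \<noteq> \<infinity>" for z
          using ereal_tri_eq[OF that] .
      qed
      also have "\<dots> \<le> ennreal ((1/2)^k) + ennreal (4 * (1/2)^k)"
      proof (rule add_mono)
        show "N1p_norm \<mu> m p \<Gamma>s (\<lambda>x. F i x - v k x) \<le> ennreal ((1/2)^k)"
          unfolding v_def using Nf[OF i n_ge[of k]] by (rule less_imp_le)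
        show "N1p_norm \<mu> m p \<Gamma>s (\<lambda>x. v k x - S.f x) \<le> ennreal (4 * (1/2)^k)"
          by (rule S.vf_N1p)
      qed
      also have "\<dots> = ennreal (5 * (1/2)^k)" by (simp add: ennreal_plus[symmetric] del: ennreal_plus)
      also have "\<dots> < ennreal e" using k e by (intro ennreal_lessI) simp_all
      also have "\<dots> \<le> u" by (rule e)
      finally show ?thesis .
    qed
    then show "\<forall>\<^sub>F x in sequentially. N1p_norm \<mu> m p \<Gamma>s (\<lambda>xa. F x xa - S.f xa) < u"
      by (auto simp: eventually_sequentially)
  qed
  show ?thesis using S.f_in conv by blast
qed

end


theorem theorem4p3:
  fixes \<mu> m :: "'a::metric_space measure" and p :: real and \<Gamma>s :: "'a path_triple set"
  assumes sets_mu: "sets \<mu> = sets borel"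
    and nonatomic: "\<And>x. emeasure \<mu> {x} = 0"
    and sets_m: "sets m = sets borel"
    and p: "1 \<le> p"
    and sub: "\<Gamma>s \<subseteq> Gamma_mu \<mu>"
    and subpath_closed: "\<And>a b g c e. (a, b, g) \<in> \<Gamma>s \<Longrightarrow> a \<le> c \<Longrightarrow> c < e \<Longrightarrow> e \<le> b
                           \<Longrightarrow> (c, e, g) \<in> \<Gamma>s"
    and joined: "\<And>x y. x \<noteq> y \<Longrightarrow> \<exists>P\<in>\<Gamma>s. start3 P = x \<and> end3 P = y"
  shows "(\<lambda>x. 0) \<in> N1p_tilde \<mu> m p \<Gamma>s
    \<and> (\<forall>f\<in>N1p_tilde \<mu> m p \<Gamma>s. \<forall>c::real.
          (\<lambda>x. ereal c * f x) \<in> N1p_tilde \<mu> m p \<Gamma>s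
        \<and> N1p_norm \<mu> m p \<Gamma>s (\<lambda>x. ereal c * f x) = ennreal \<bar>c\<bar> * N1p_norm \<mu> m p \<Gamma>s f)
    \<and> (\<forall>f\<in>N1p_tilde \<mu> m p \<Gamma>s. \<forall>g\<in>N1p_tilde \<mu> m p \<Gamma>s.
          (\<lambda>x. f x + g x) \<in> N1p_tilde \<mu> m p \<Gamma>s
        \<and> N1p_norm \<mu> m p \<Gamma>s (\<lambda>x. f x + g x) \<le> N1p_norm \<mu> m p \<Gamma>s f + N1p_norm \<mu> m p \<Gamma>s g)
    \<and> (\<forall>F::nat \<Rightarrow> 'a \<Rightarrow> ereal. (\<forall>n. F n \<in> N1p_tilde \<mu> m p \<Gamma>s) \<longrightarrow>
          (\<forall>\<epsilon>>0. \<exists>N. \<forall>i\<ge>N. \<forall>j\<ge>N. N1p_norm \<mu> m p \<Gamma>s (\<lambda>x. F i x - F j x) < ennreal \<epsilon>) \<longrightarrow>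
          (\<exists>f\<in>N1p_tilde \<mu> m p \<Gamma>s. (\<lambda>n. N1p_norm \<mu> m p \<Gamma>s (\<lambda>x. F n x - f x)) \<longlonglongrightarrow> 0))"
proof -
  interpret NS \<mu> m p \<Gamma>s
  proof
    show "sets \<mu> = sets borel" by (rule sets_mu)
    show "sets m = sets borel" by (rule sets_m)
    show "1 \<le> p" by (rule p)
    show "\<Gamma>s \<subseteq> Gamma_mu \<mu>" by (rule sub)
    show "(c, e, g) \<in> \<Gamma>s" if "(a, b, g) \<in> \<Gamma>s" "a \<le> c" "c < e" "e \<le> b" for a b g c e
      using subpath_closed[OF that] .
  qed
  have meas: "f \<in> borel_measurable m" if "f \<in> N1p_tilde \<mu> m p \<Gamma>s" for f
    using that by (simp add: N1p_tilde_def)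
  have part2: "\<forall>f\<in>N1p_tilde \<mu> m p \<Gamma>s. \<forall>c::real.
          (\<lambda>x. ereal c * f x) \<in> N1p_tilde \<mu> m p \<Gamma>s
        \<and> N1p_norm \<mu> m p \<Gamma>s (\<lambda>x. ereal c * f x) = ennreal \<bar>c\<bar> * N1p_norm \<mu> m p \<Gamma>s f"
    using N1p_tilde_scale N1p_scale meas by blast
  have part3: "\<forall>f\<in>N1p_tilde \<mu> m p \<Gamma>s. \<forall>g\<in>N1p_tilde \<mu> m p \<Gamma>s.
          (\<lambda>x. f x + g x) \<in> N1p_tilde \<mu> m p \<Gamma>s
        \<and> N1p_norm \<mu> m p \<Gamma>s (\<lambda>x. f x + g x) \<le> N1p_norm \<mu> m p \<Gamma>s f + N1p_norm \<mu> m p \<Gamma>s g"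
  proof (intro ballI conjI)
    fix f g assume f: "f \<in> N1p_tilde \<mu> m p \<Gamma>s" and g: "g \<in> N1p_tilde \<mu> m p \<Gamma>s"
    have mf: "f \<in> borel_measurable m" and mg: "g \<in> borel_measurable m" using meas f g by auto
    have mfg: "(\<lambda>x. f x + g x) \<in> borel_measurable m" using mf mg by measurable
    show "(\<lambda>x. f x + g x) \<in> N1p_tilde \<mu> m p \<Gamma>s"
      by (rule N1p_tilde_GT[OF mfg f g]) (auto intro: ereal_abs_add)
    show "N1p_norm \<mu> m p \<Gamma>s (\<lambda>x. f x + g x) \<le> N1p_norm \<mu> m p \<Gamma>s f + N1p_norm \<mu> m p \<Gamma>s g"
      by (rule N1p_GT[OF mf mg]) (auto intro: ereal_abs_add)
  qed
  have part4: "\<forall>F::nat \<Rightarrow> 'a \<Rightarrow> ereal. (\<forall>n. F n \<in> N1p_tilde \<mu> m p \<Gamma>s) \<longrightarrow>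
          (\<forall>\<epsilon>>0. \<exists>N. \<forall>i\<ge>N. \<forall>j\<ge>N. N1p_norm \<mu> m p \<Gamma>s (\<lambda>x. F i x - F j x) < ennreal \<epsilon>) \<longrightarrow>
          (\<exists>f\<in>N1p_tilde \<mu> m p \<Gamma>s. (\<lambda>n. N1p_norm \<mu> m p \<Gamma>s (\<lambda>x. F n x - f x)) \<longlonglongrightarrow> 0)"
    using completeness by blast
  show ?thesis using zero_in part2 part3 part4 by blast
qed


end
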